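(* Let $J=\{j_0,\dots,j_{p-1}\}\subset\mathbf Z_p$ with $j_i\equiv i\pmod p$. If $r=0$, then $T(\mathrm{ind}_{\mathrm B\cap\mathrm K\mathrm Z}^{\mathrm B}1)$ is the span of the $\mathrm B$-translates of $$\begin{pmatrix}1&0\\0&p\end{pmatrix}[1,1]+\sum_{j\in J}\begin{pmatrix}p&j\\0&1\end{pmatrix}[1,1].$$ If $1\le r\le p-1$, then $T(\mathrm{ind}_{\mathrm B\cap\mathrm K\mathrm Z}^{\mathrm B}\mathrm{Sym}^rk^2)\cap\mathrm{ind}_{\mathrm B\cap\mathrm K\mathrm Z}^{\mathrm B}(\omega^r\otimes1)$ is the span of the $\mathrm B$-translates of the vectors $\sum_{j\in J}(-j)^i\begin{pmatrix}p&j\\0&1\end{pmatrix}[1,x^r]$ for $0\le i\le r-1$, and of the vectors $$\sum_{i=0}^{p-1}\lambda_ii^r[1,x^r]+\sum_{i=0}^{p-1}\lambda_i\begin{pmatrix}1&p^{-1}i\\0&p^{-1}\end{pmatrix}\sum_{j\in J}(-j)^r\begin{pmatrix}p&j\\0&1\end{pmatrix}[1,x^r]$$ for all $\lambda_0,\dots,\lambda_{p-1}\in k$ with $\sum_{i=0}^{p-1}i^\ell\lambda_i=0$ for all $0\le\ell\le r-1$.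
   Context: $p$ prime, $k$ finite extension of $\mathbf F_p$, $r\in\{0,\dots,p-1\}$. $\mathrm G=\mathrm{GL}_2(\mathbf Q_p)$, $\mathrm B$ upper triangular Borel, $\mathrm K=\mathrm{GL}_2(\mathbf Z_p)$, $\mathrm Z$ the centre. $\mathrm{Sym}^rk^2$ = homogeneous polynomials of degree $r$ in $x,y$ over $k$ with $\begin{pmatrix}a&b\\c&d\end{pmatrix}P(x,y)=P(ax+cy,bx+dy)$ on $\mathrm K$ (through reduction mod $p$), $\mathrm{diag}(p,p)$ acting trivially; $\mathrm{Sym}^0k^2=1$ is the trivial representation. $\omega^r\otimes1$ is the character $\begin{pmatrix}a&b\\0&d\end{pmatrix}\mapsto\omega^r(a)$ ($\omega(a)=ap^{-\mathrm{val}(a)}\bmod p$) of $\mathrm B\cap\mathrm K\mathrm Z$, identified with $k\,x^r\subset\mathrm{Sym}^rk^2$. Compact induction with $[b,v](g)=gb\cdot v$ if $gb\in\mathrm B\cap\mathrm K\mathrm Z$, $0$ otherwise; $\mathrm B$ acts by right translation, so $b'\cdot[b,v]=[b'b,v]$. $T$ is the Barthel–Livné Hecke operator on $\mathrm{ind}_{\mathrm K\mathrm Z}^{\mathrm G}\mathrm{Sym}^rk^2\simeq\mathrm{ind}_{\mathrm B\cap\mathrm K\mathrm Z}^{\mathrm B}\mathrm{Sym}^rk^2$ (restriction isomorphism from $\mathrm G=\mathrm B\mathrm K$): the $\mathrm G$-equivariant endomorphism with, for any set $J$ of representatives of $\mathbf F_p$ in $\mathbf Z_p$, $T([1,x^{r-i}y^i])=\sum_{j\in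 J}\begin{pmatrix}p&j\\0&1\end{pmatrix}[1,(-j)^ix^r]$ for $0\le i\le r-1$, and $T([1,y^r])=\begin{pmatrix}1&0\\0&p\end{pmatrix}[1,y^r]+\sum_{j\in J}\begin{pmatrix}p&j\\0&1\end{pmatrix}[1,(-j)^rx^r]$. *)

theory Defs
  imports Complex_Main "HOL-Computational_Algebra.Primes"
begin

(* Elements of the upper triangular Borel: triples (a,b,d) for the matrix [[a,b],[0,d]]. *)
type_synonym 'q tri = "'q \<times> 'q \<times> 'q"

definition bmul :: "'q::field tri \<Rightarrow> 'q tri \<Rightarrow> 'q tri" where
  "bmul g h = (case g of (a,b,d) \<Rightarrow> case h of (a',b',d') \<Rightarrow> (a*a', a*b' + b*d', d*d'))"

definition Bor :: "'q::field tri set" where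
  "Bor = {(a,b,d). a \<noteq> 0 \<and> d \<noteq> 0}"

definition vge :: "('q::field \<Rightarrow> int) \<Rightarrow> 'q \<Rightarrow> int \<Rightarrow> bool" where
  "vge v x n \<longleftrightarrow> x = 0 \<or> n \<le> v x"

(* (F, v) is (isomorphic to) Q_p with its p-adic valuation: a complete discretely valued
   field of characteristic 0, with p a uniformiser and residue field F_p. *)
definition is_Qp :: "nat \<Rightarrow> ('q::field_char_0 \<Rightarrow> int) \<Rightarrow> bool" where
  "is_Qp p v \<longleftrightarrow> prime p \<and>
     (\<forall>x y. x \<noteq> 0 \<longrightarrow> y \<noteq> 0 \<longrightarrow> v (x*y) = v x + v y) \<and>
     (\<forall>x y. x \<noteq> 0 \<longrightarrow> y \<noteq> 0 \<longrightarrow> x + y \<noteq> 0 \<longrightarrow> min (v x) (v y) \<le> v (x + y)) \<and>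
     v (of_nat p) = 1 \<and>
     (\<forall>x. vge v x 0 \<longrightarrow> (\<exists>j::int. vge v (x - of_int j) 1)) \<and>
     (\<forall>s::nat \<Rightarrow> 'q. (\<forall>n. \<exists>N. \<forall>m\<ge>N. \<forall>m'\<ge>N. vge v (s m - s m') n)
         \<longrightarrow> (\<exists>L. \<forall>n. \<exists>N. \<forall>m\<ge>N. vge v (s m - L) n))"

(* B \<inter> KZ = { p^n [[a,b],[0,d]] : a,d \<in> Z_p^*, b \<in> Z_p } *)
definition BKZ :: "('q::field \<Rightarrow> int) \<Rightarrow> 'q tri set" where
  "BKZ v = {(a,b,d). a \<noteq> 0 \<and> d \<noteq> 0 \<and> v a = v d \<and> vge v b (v d)}"

(* reduction Z_p \<rightarrow> F_p \<subseteq> k *)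
definition red :: "('q::field \<Rightarrow> int) \<Rightarrow> 'q \<Rightarrow> 'k::field" where
  "red v x = (SOME c. \<exists>j::int. c = of_int j \<and> vge v (x - of_int j) 1)"

(* Sym^r k^2: c i is the coefficient of x^(r-i) y^i *)
definition Sym :: "nat \<Rightarrow> (nat \<Rightarrow> 'k::field) set" where
  "Sym r = {c. \<forall>i>r. c i = 0}"

(* the line k x^r (= omega^r \<otimes> 1) *)
definition Line :: "(nat \<Rightarrow> 'k::field) set" where
  "Line = {c. \<forall>i\<ge>1. c i = 0}"

definition mono :: "nat \<Rightarrow> nat \<Rightarrow> 'k::field" where
  "mono i = (\<lambda>m. if m = i then 1 else 0)"

(* action of g = p^n [[a',b'],[0,d']] \<in> B \<inter> KZ on Sym^r k^2 :
   P(x,y) \<mapsto> P(red a' x, red b' x + red d' y), p^n acting trivially *)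
definition symact :: "nat \<Rightarrow> ('q::field \<Rightarrow> int) \<Rightarrow> nat \<Rightarrow> 'q tri \<Rightarrow> (nat \<Rightarrow> 'k::field) \<Rightarrow> (nat \<Rightarrow> 'k)" where
  "symact p v r g c = (case g of (a,b,d) \<Rightarrow>
     let s = (of_nat p :: 'q) powi (- v d);
         A = (red v (a*s) :: 'k); Bb = (red v (b*s) :: 'k); D = (red v (d*s) :: 'k)
     in (\<lambda>m. if m \<le> r then (\<Sum>i = m..r. c i * A^(r-i) * of_nat (i choose m) * Bb^(i-m) * D^m) else 0))"

(* compact induction ind_{B \<inter> KZ}^B W (W = Sym r or Line), as functions f : B \<rightarrow> W with
   f(h g) = h.f(g), supported on finitely many cosets (B \<inter> KZ) g *)
definition ind :: "nat \<Rightarrow> ('q::field \<Rightarrow> int) \<Rightarrow> nat \<Rightarrow> (nat \<Rightarrow> 'k::field) set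
                   \<Rightarrow> ('q tri \<Rightarrow> nat \<Rightarrow> 'k) set" where
  "ind p v r W = {f. (\<forall>g. f g \<in> W) \<and> (\<forall>g. g \<notin> Bor \<longrightarrow> f g = (\<lambda>_. 0)) \<and>
     (\<forall>h\<in>BKZ v. \<forall>g\<in>Bor. f (bmul h g) = symact p v r h (f g)) \<and>
     (\<exists>F. finite F \<and> F \<subseteq> Bor \<and>
        (\<forall>g. f g \<noteq> (\<lambda>_. 0) \<longrightarrow> (\<exists>h\<in>BKZ v. \<exists>x\<in>F. g = bmul h x)))}"

(* [b,w](g) = gb.w if gb \<in> B \<inter> KZ, 0 otherwise *)
definition brk :: "nat \<Rightarrow> ('q::field \<Rightarrow> int) \<Rightarrow> nat \<Rightarrow> 'q tri \<Rightarrow> (nat \<Rightarrow> 'k::field)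
                   \<Rightarrow> ('q tri \<Rightarrow> nat \<Rightarrow> 'k)" where
  "brk p v r b w = (\<lambda>g. if g \<in> Bor \<and> bmul g b \<in> BKZ v then symact p v r (bmul g b) w else (\<lambda>_. 0))"

definition bact :: "'q::field tri \<Rightarrow> ('q tri \<Rightarrow> nat \<Rightarrow> 'k) \<Rightarrow> ('q tri \<Rightarrow> nat \<Rightarrow> 'k)" where
  "bact b f = (\<lambda>g. f (bmul g b))"

definition fadd :: "('a \<Rightarrow> nat \<Rightarrow> 'k::field) \<Rightarrow> ('a \<Rightarrow> nat \<Rightarrow> 'k) \<Rightarrow> ('a \<Rightarrow> nat \<Rightarrow> 'k)" where
  "fadd f1 f2 = (\<lambda>g m. f1 g m + f2 g m)"

definition fsc :: "'k::field \<Rightarrow> ('a \<Rightarrow> nat \<Rightarrow> 'k) \<Rightarrow> ('a \<Rightarrow> nat \<Rightarrow> 'k)" where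
  "fsc c f = (\<lambda>g m. c * f g m)"

definition fsum :: "'i set \<Rightarrow> ('i \<Rightarrow> 'a \<Rightarrow> nat \<Rightarrow> 'k::field) \<Rightarrow> ('a \<Rightarrow> nat \<Rightarrow> 'k)" where
  "fsum I F = (\<lambda>g m. \<Sum>i\<in>I. F i g m)"

definition vsc :: "'k::field \<Rightarrow> (nat \<Rightarrow> 'k) \<Rightarrow> (nat \<Rightarrow> 'k)" where
  "vsc c w = (\<lambda>m. c * w m)"

definition kspan :: "('a \<Rightarrow> nat \<Rightarrow> 'k::field) set \<Rightarrow> ('a \<Rightarrow> nat \<Rightarrow> 'k) set" where
  "kspan S = {f. \<exists>(n::nat) c u. (\<forall>i<n. u i \<in> S) \<and> f = (\<lambda>g m. \<Sum>i<n. c i * u i g m)}"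

definition repset :: "nat \<Rightarrow> ('q::field \<Rightarrow> int) \<Rightarrow> 'q set \<Rightarrow> bool" where
  "repset p v J \<longleftrightarrow> (\<forall>j\<in>J. vge v j 0) \<and>
     (\<forall>i<p. \<exists>!j. j \<in> J \<and> vge v (j - of_nat i) 1)"

end

theory Submission
  imports Defs "HOL-Computational_Algebra.Polynomial"
begin

locale qp =
  fixes p :: nat and v :: "'q::field_char_0 \<Rightarrow> int"
  assumes Qp: "is_Qp p v"
begin

lemma prime_p: "prime p" using Qp unfolding is_Qp_def by blast
lemma vmul: "x \<noteq> 0 \<Longrightarrow> y \<noteq> 0 \<Longrightarrow> v (x*y) = v x + v y" using Qp unfolding is_Qp_def by blast
lemma vadd: "x \<noteq> 0 \<Longrightarrow> y \<noteq> 0 \<Longrightarrow> x + y \<noteq> 0 \<Longrightarrow> min (v x) (v y) \<le> v (x + y)"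
  using Qp unfolding is_Qp_def by blast
lemma vp: "v (of_nat p) = 1" using Qp unfolding is_Qp_def by blast
lemma res: "vge v x 0 \<Longrightarrow> \<exists>j::int. vge v (x - of_int j) 1" using Qp unfolding is_Qp_def by blast

lemma p_pos: "p > 0" using prime_p prime_gt_0_nat by blast
lemma p_nz: "(of_nat p :: 'q) \<noteq> 0" using p_pos by simp

lemma v1: "v 1 = 0" using vmul[of 1 1] by simp
lemma vm1: "v (-1) = 0" using vmul[of "-1" "-1"] v1 by simp
lemma vneg: "v (- x) = v x"
proof (cases "x = 0")
  case False thus ?thesis using vmul[of "-1" x] vm1 by simp
qed simp
lemma vinv: "x \<noteq> 0 \<Longrightarrow> v (inverse x) = - v x"
  using vmul[of x "inverse x"] v1 by simp
lemma vdiv: "x \<noteq> 0 \<Longrightarrow> y \<noteq> 0 \<Longrightarrow> v (x / y) = v x - v y"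
  using vmul[of x "inverse y"] vinv[of y] by (simp add: divide_inverse)

lemma vge_0[simp]: "vge v 0 n" by (simp add: vge_def)
lemma vge_mono: "vge v x m \<Longrightarrow> n \<le> m \<Longrightarrow> vge v x n" by (auto simp: vge_def)
lemma vge_add: "vge v x n \<Longrightarrow> vge v y n \<Longrightarrow> vge v (x+y) n"
  unfolding vge_def using vadd[of x y] by fastforce
lemma vge_neg[simp]: "vge v (-x) n \<longleftrightarrow> vge v x n" by (simp add: vge_def vneg)
lemma vge_diff: "vge v x n \<Longrightarrow> vge v y n \<Longrightarrow> vge v (x-y) n"
  using vge_add[of x n "-y"] by simp
lemma vge_mult: "vge v x n \<Longrightarrow> vge v y m \<Longrightarrow> vge v (x*y) (n+m)"
  unfolding vge_def by (cases "x = 0"; cases "y = 0") (auto simp: vmul)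
lemma vge_nat: "vge v (of_nat k) 0"
proof (induction k)
  case (Suc k) thus ?case using vge_add[of 1 0 "of_nat k"] v1 by (simp add: vge_def add.commute)
qed simp
lemma vge_int: "vge v (of_int j) 0"
proof (cases j)
  case (nonneg n) thus ?thesis using vge_nat by simp
next
  case (neg n)
  hence "(of_int j :: 'q) = - of_nat (Suc n)" by simp
  thus ?thesis using vge_nat vge_neg by metis
qed
lemma vge_1: "vge v 1 0" by (simp add: vge_def v1)

lemma vge_int1_dvd: assumes "vge v (of_int j) 1" shows "int p dvd j"
proof (rule ccontr)
  assume "\<not> int p dvd j"
  hence "coprime (int p) j" using prime_p
    by (intro prime_imp_coprime) auto
  hence g: "gcd (int p) j = 1" by simp
  obtain u w where uw: "u * int p + w * j = 1"
    using bezout_int[of "int p" j] g by metis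
  have "vge v (of_int u * of_nat p) (0+1)" using vge_mult[OF vge_int[of u], of "of_nat p" 1] vp
    by (simp add: vge_def)
  moreover have "vge v (of_int w * of_int j) (0+1)" using vge_mult[OF vge_int[of w] assms] .
  ultimately have "vge v (of_int u * of_nat p + of_int w * of_int j) 1" using vge_add by simp
  moreover have "(of_int u * of_nat p + of_int w * of_int j :: 'q) = of_int (u * int p + w * j)" by simp
  ultimately have "vge v (1::'q) 1" using uw by simp
  thus False by (simp add: vge_def v1)
qed

lemma dvd_vge1: assumes "int p dvd j" shows "vge v (of_int j :: 'q) 1"
proof -
  obtain t where "j = int p * t" using assms by blast
  hence "(of_int j :: 'q) = of_nat p * of_int t" by simp
  moreover have "vge v (of_nat p * of_int t :: 'q) (1+0)"
    by (rule vge_mult) (use vp vge_int in \<open>auto simp: vge_def\<close>)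
  ultimately show ?thesis by simp
qed

lemma CHAR_k: assumes "(of_nat p :: 'k::field) = 0" shows "CHAR('k) = p"
proof -
  have "CHAR('k) dvd p" using assms by (simp add: of_nat_eq_0_iff_char_dvd)
  thus ?thesis using prime_p CHAR_not_1' by (metis One_nat_def prime_nat_iff)
qed

lemma of_int_k0: assumes "(of_nat p :: 'k::field) = 0"
  shows "((of_int j :: 'k) = 0) \<longleftrightarrow> int p dvd j"
  using of_int_eq_0_iff_char_dvd[where 'a='k] CHAR_k[OF assms] by simp

lemma red_eq: assumes k: "(of_nat p :: 'k::field) = 0" and "vge v (x - of_int j) 1"
  shows "(red v x :: 'k) = of_int j"
proof -
  have "\<exists>c::'k. \<exists>j'::int. c = of_int j' \<and> vge v (x - of_int j') 1" using assms by blast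
  hence "\<exists>j'::int. (red v x :: 'k) = of_int j' \<and> vge v (x - of_int j') 1"
    unfolding red_def by (rule someI_ex)
  then obtain j' where j': "(red v x :: 'k) = of_int j'" "vge v (x - of_int j') 1" by blast
  have "vge v ((x - of_int j) - (x - of_int j') :: 'q) 1" using vge_diff assms(2) j'(2) by blast
  hence "vge v (of_int (j' - j) :: 'q) 1" by simp
  hence "int p dvd (j' - j)" by (rule vge_int1_dvd)
  hence "(of_int (j' - j) :: 'k) = 0" using of_int_k0[OF k, of "j'-j"] by blast
  hence "(of_int j' :: 'k) - of_int j = 0" by (simp only: of_int_diff)
  thus ?thesis using j' by simp
qed

lemma red_ex: "vge v x 0 \<Longrightarrow> \<exists>j. vge v (x - of_int j) 1" by (rule res)

lemma red_add: assumes k: "(of_nat p :: 'k::field) = 0" and "vge v x 0" "vge v y 0"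
  shows "(red v (x + y) :: 'k) = red v x + red v y"
proof -
  obtain j1 j2 where j: "vge v (x - of_int j1) 1" "vge v (y - of_int j2) 1" using res assms by blast
  have "vge v ((x - of_int j1) + (y - of_int j2)) 1" using vge_add j by blast
  hence "vge v ((x+y) - of_int (j1+j2)) 1" by (simp add: algebra_simps)
  hence "(red v (x+y) :: 'k) = of_int (j1+j2)" by (rule red_eq[OF k])
  thus ?thesis using red_eq[OF k j(1)] red_eq[OF k j(2)] by simp
qed

lemma red_mult: assumes k: "(of_nat p :: 'k::field) = 0" and "vge v x 0" "vge v y 0"
  shows "(red v (x * y) :: 'k) = red v x * red v y"
proof -
  obtain j1 j2 where j: "vge v (x - of_int j1) 1" "vge v (y - of_int j2) 1" using res assms by blast
  have a: "vge v (x * (y - of_int j2)) (0+1)" using vge_mult assms(2) j(2) by blast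
  have b: "vge v ((x - of_int j1) * of_int j2) (1+0)" using vge_mult j(1) vge_int by blast
  have "vge v (x * (y - of_int j2) + (x - of_int j1) * of_int j2) 1" using vge_add a b by simp
  hence "vge v ((x*y) - of_int (j1*j2)) 1" by (simp add: algebra_simps)
  hence "(red v (x*y) :: 'k) = of_int (j1*j2)" by (rule red_eq[OF k])
  thus ?thesis using red_eq[OF k j(1)] red_eq[OF k j(2)] by simp
qed

lemma red_int: "(of_nat p :: 'k::field) = 0 \<Longrightarrow> (red v (of_int j :: 'q) :: 'k) = of_int j"
  by (rule red_eq) auto
lemma red_nat: "(of_nat p :: 'k::field) = 0 \<Longrightarrow> (red v (of_nat j :: 'q) :: 'k) = of_nat j"
  using red_int[of "int j"] by simp

lemma red_neg: assumes k: "(of_nat p :: 'k::field) = 0" and "vge v x 0"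
  shows "(red v (- x) :: 'k) = - red v x"
proof -
  have "(red v (x + -x) :: 'k) = red v x + red v (-x)" using red_add[OF k assms(2), of "-x"] assms by simp
  moreover have "(red v (0::'q) :: 'k) = 0" using red_int[OF k, of 0] by simp
  ultimately show ?thesis by (simp add: eq_neg_iff_add_eq_0 add.commute)
qed

lemma red_diff: assumes k: "(of_nat p :: 'k::field) = 0" and "vge v x 0" "vge v y 0"
  shows "(red v (x - y) :: 'k) = red v x - red v y"
  using red_add[OF k assms(2), of "-y"] red_neg[OF k assms(3)] assms(3) by simp

lemma red_zero_iff: assumes k: "(of_nat p :: 'k::field) = 0" and "vge v x 0"
  shows "((red v x :: 'k) = 0) \<longleftrightarrow> vge v x 1"
proof -
  obtain j where j: "vge v (x - of_int j) 1" using res assms by blast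
  have r: "(red v x :: 'k) = of_int j" using red_eq[OF k j] .
  show ?thesis
  proof
    assume "(red v x :: 'k) = 0"
    hence "int p dvd j" using r of_int_k0[OF k] by simp
    hence "vge v (of_int j :: 'q) 1" by (rule dvd_vge1)
    from vge_add[OF j this] show "vge v x 1" by simp
  next
    assume "vge v x 1"
    from vge_diff[OF this j] have "vge v (of_int j :: 'q) 1" by simp
    hence "int p dvd j" by (rule vge_int1_dvd)
    thus "(red v x :: 'k) = 0" using r of_int_k0[OF k] by simp
  qed
qed

lemma red_unit: assumes k: "(of_nat p :: 'k::field) = 0" and "x \<noteq> 0" "v x = 0"
  shows "(red v x :: 'k) \<noteq> 0"
  using red_zero_iff[OF k, of x] assms by (simp add: vge_def)

lemma red_nat_rep: assumes k: "(of_nat p :: 'k::field) = 0" and "vge v x 0"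
  shows "\<exists>i<p. (red v x :: 'k) = of_nat i"
proof -
  obtain j where j: "vge v (x - of_int j) 1" using res assms by blast
  have r: "(red v x :: 'k) = of_int j" using red_eq[OF k j] .
  have "int p dvd (j - j mod int p)" by (simp add: mod_0_imp_dvd minus_mod_eq_mult_div)
  hence "(of_int (j - j mod int p) :: 'k) = 0" using of_int_k0[OF k] by blast
  hence "(of_int j :: 'k) - of_int (j mod int p) = 0" by (simp only: of_int_diff)
  hence "(of_int j :: 'k) = of_int (j mod int p)" by (metis right_minus_eq)
  moreover have "j mod int p = int (nat (j mod int p))" using p_pos by simp
  moreover have "nat (j mod int p) < p" using p_pos by (simp add: nat_less_iff)
  ultimately show ?thesis using r by (metis of_int_of_nat_eq)
qed

definition pp :: "int \<Rightarrow> 'q" where "pp n = (of_nat p :: 'q) powi n"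

lemma pp_nz[simp]: "pp n \<noteq> 0" unfolding pp_def using p_nz by simp
lemma pp_add: "pp (m + n) = pp m * pp n" unfolding pp_def using p_nz by (simp add: power_int_add)
lemma pp_v[simp]: "v (pp n) = n"
proof -
  have nat: "v ((of_nat p :: 'q) ^ k) = int k" for k
  proof (induction k)
    case (Suc k) thus ?case using vmul[of "of_nat p" "of_nat p ^ k"] p_nz vp by simp
  qed (simp add: v1)
  show ?thesis
  proof (cases "n \<ge> 0")
    case True thus ?thesis unfolding pp_def using nat[of "nat n"] by (simp add: power_int_def)
  next
    case False
    hence "pp n = inverse ((of_nat p :: 'q) ^ nat (-n))" unfolding pp_def
      by (simp add: power_int_def power_inverse)
    thus ?thesis using nat[of "nat (-n)"] vinv[of "(of_nat p :: 'q) ^ nat (-n)"] p_nz False by simp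
  qed
qed

end

definition sa :: "nat \<Rightarrow> 'k::field \<Rightarrow> 'k \<Rightarrow> 'k \<Rightarrow> (nat \<Rightarrow> 'k) \<Rightarrow> (nat \<Rightarrow> 'k)" where
  "sa r A B D c = (\<lambda>m. if m \<le> r then (\<Sum>i = m..r. c i * A^(r-i) * of_nat (i choose m) * B^(i-m) * D^m) else 0)"

lemma sa_full: "m \<le> r \<Longrightarrow> sa r A B D c m = (\<Sum>i\<le>r. c i * A^(r-i) * of_nat (i choose m) * B^(i-m) * D^m)"
proof -
  assume "m \<le> r"
  have "{..r} = {m..r} \<union> {..<m}" using \<open>m \<le> r\<close> by auto
  moreover have "(\<Sum>i\<in>{..<m}. c i * A^(r-i) * of_nat (i choose m) * B^(i-m) * D^m) = 0"
    by (rule sum.neutral) (auto simp: binomial_eq_0)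
  moreover have "finite {m..r}" "finite {..<m}" "{m..r} \<inter> {..<m} = {}" by auto
  ultimately show ?thesis using \<open>m \<le> r\<close> unfolding sa_def
    by (simp add: sum.union_disjoint)
qed

lemma smult_sum_right: "smult a (sum f S) = (\<Sum>i\<in>S. smult a (f i))"
  by (induction S rule: infinite_finite_induct) (auto simp: smult_add_right)

definition ev :: "nat \<Rightarrow> (nat \<Rightarrow> 'k::field) \<Rightarrow> 'k poly \<Rightarrow> 'k poly \<Rightarrow> 'k poly" where
  "ev r c x y = (\<Sum>i\<le>r. smult (c i) (x^(r-i) * y^i))"

lemma binom_ext: "i \<le> r \<Longrightarrow> ((u::'k::field poly) + w)^i = (\<Sum>m\<le>r. of_nat (i choose m) * u^m * w^(i-m))"
proof -
  assume "i \<le> r"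
  have "{..r} = {..i} \<union> {i<..r}" using \<open>i \<le> r\<close> by auto
  moreover have "(\<Sum>m\<in>{i<..r}. of_nat (i choose m) * u^m * w^(i-m)) = 0"
    by (rule sum.neutral) (auto simp: binomial_eq_0)
  moreover have "(\<Sum>m\<in>{..i} \<union> {i<..r}. of_nat (i choose m) * u^m * w^(i-m)) =
     (\<Sum>m\<in>{..i}. of_nat (i choose m) * u^m * w^(i-m)) + (\<Sum>m\<in>{i<..r}. of_nat (i choose m) * u^m * w^(i-m))"
    by (rule sum.union_disjoint) auto
  ultimately show ?thesis by (simp add: binomial_ring)
qed

lemma ev_sa: fixes A B D :: "'k::field" shows "ev r (sa r A B D c) x y = ev r c (smult A x) (smult B x + smult D y)"
proof -
  have lhs: "ev r (sa r A B D c) x y =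
     (\<Sum>m\<le>r. \<Sum>i\<le>r. smult (c i * A^(r-i) * of_nat (i choose m) * B^(i-m) * D^m) (x^(r-m) * y^m))"
    unfolding ev_def by (simp add: sa_full smult_sum_right smult_sum)
  have trm: "smult (c i) ((smult A x)^(r-i) * (of_nat (i choose m) * (smult D y)^m * (smult B x)^(i-m)))
      = smult (c i * A^(r-i) * of_nat (i choose m) * B^(i-m) * D^m) (x^(r-m) * y^m)"
    if "i \<le> r" for i m
  proof (cases "m \<le> i")
    case True
    have xx: "x^(r-i) * x^(i-m) = x^(r-m)" using True that by (simp add: power_add[symmetric])
    have "(of_nat (i choose m) :: 'k poly) = smult (of_nat (i choose m)) 1"
      by (simp add: of_nat_poly)
    hence "smult (c i) ((smult A x)^(r-i) * (of_nat (i choose m) * (smult D y)^m * (smult B x)^(i-m)))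
       = smult (c i * A^(r-i) * of_nat (i choose m) * B^(i-m) * D^m) (x^(r-i) * x^(i-m) * y^m)"
      by (simp add: smult_power mult_ac)
    thus ?thesis using xx by simp
  next
    case False thus ?thesis by (simp add: binomial_eq_0)
  qed
  have "ev r c (smult A x) (smult B x + smult D y) =
     (\<Sum>i\<le>r. \<Sum>m\<le>r. smult (c i) ((smult A x)^(r-i) * (of_nat (i choose m) * (smult D y)^m * (smult B x)^(i-m))))"
    unfolding ev_def by (simp add: binom_ext add.commute[of "smult B x"] sum_distrib_left smult_sum_right smult_sum)
  also have "\<dots> = (\<Sum>i\<le>r. \<Sum>m\<le>r. smult (c i * A^(r-i) * of_nat (i choose m) * B^(i-m) * D^m) (x^(r-m) * y^m))"
    using trm by (intro sum.cong refl) auto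
  also have "\<dots> = ev r (sa r A B D c) x y" unfolding lhs by (rule sum.swap)
  finally show ?thesis by simp
qed

lemma ev_coeff: "m \<le> r \<Longrightarrow> coeff (ev r c [:0,1:] 1) (r - m) = c m"
proof -
  assume m: "m \<le> r"
  have "coeff (ev r c [:0,1:] 1) (r - m) = (\<Sum>i\<le>r. c i * (if r - i = r - m then 1 else 0))"
    unfolding ev_def by (simp add: coeff_sum monom_altdef[of 1, simplified, symmetric])
  also have "\<dots> = (\<Sum>i\<le>r. if i = m then c i else 0)"
    using m by (intro sum.cong refl) auto
  also have "\<dots> = c m" using m by simp
  finally show ?thesis .
qed

lemma sa_comp: "sa r A1 B1 D1 (sa r A2 B2 D2 c) = sa r (A1*A2) (A1*B2 + B1*D2) (D1*D2) c"
proof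
  fix m show "sa r A1 B1 D1 (sa r A2 B2 D2 c) m = sa r (A1*A2) (A1*B2 + B1*D2) (D1*D2) c m"
  proof (cases "m \<le> r")
    case True
    have "ev r (sa r A1 B1 D1 (sa r A2 B2 D2 c)) [:0,1:] 1 = ev r (sa r (A1*A2) (A1*B2 + B1*D2) (D1*D2) c) [:0,1:] 1"
      by (simp add: ev_sa smult_add_right algebra_simps)
    hence "coeff (ev r (sa r A1 B1 D1 (sa r A2 B2 D2 c)) [:0,1:] 1) (r - m)
      = coeff (ev r (sa r (A1*A2) (A1*B2 + B1*D2) (D1*D2) c) [:0,1:] 1) (r-m)" by simp
    thus ?thesis by (simp only: ev_coeff[OF True])
  next
    case False thus ?thesis by (simp add: sa_def)
  qed
qed

lemma sa_add: "sa r A B D (\<lambda>i. c i + c' i) = (\<lambda>m. sa r A B D c m + sa r A B D c' m)"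
  by (auto simp: sa_def algebra_simps sum.distrib)
lemma sa_scale: "sa r A B D (\<lambda>i. a * c i) = (\<lambda>m. a * sa r A B D c m)"
  by (auto simp: sa_def algebra_simps sum_distrib_left)
lemma sa_zero: "sa r A B D (\<lambda>i. 0) = (\<lambda>m. 0)"
  by (auto simp: sa_def)
lemma sa_sum: "sa r A B D (\<lambda>i. \<Sum>j\<in>S. c j i) = (\<lambda>m. \<Sum>j\<in>S. sa r A B D (c j) m)"
proof
  fix m
  have "(\<Sum>i = m..r. (\<Sum>j\<in>S. c j i) * A^(r-i) * of_nat (i choose m) * B^(i-m) * D^m)
     = (\<Sum>i = m..r. \<Sum>j\<in>S. c j i * (A^(r-i) * of_nat (i choose m) * B^(i-m) * D^m))"
    by (simp add: sum_distrib_right mult.assoc)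
  also have "\<dots> = (\<Sum>j\<in>S. \<Sum>i = m..r. c j i * (A^(r-i) * of_nat (i choose m) * B^(i-m) * D^m))"
    by (rule sum.swap)
  finally show "sa r A B D (\<lambda>i. \<Sum>j\<in>S. c j i) m = (\<Sum>j\<in>S. sa r A B D (c j) m)"
    by (simp add: sa_def mult.assoc)
qed
lemma sa_Sym: "sa r A B D c \<in> Sym r" by (simp add: sa_def Sym_def)
lemma sa_Line: "c \<in> Line \<Longrightarrow> sa r A B D c \<in> Line"
  unfolding Line_def sa_def by (auto intro!: sum.neutral)
lemma sa_id: "c \<in> Sym r \<Longrightarrow> sa r 1 0 1 c = c"
proof
  fix m assume c: "c \<in> Sym r"
  show "sa r 1 0 1 c m = c m"
  proof (cases "m \<le> r")
    case True
    have "sa r 1 0 1 c m = (\<Sum>i = m..r. if i = m then c i else 0)"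
      unfolding sa_def using True by (intro if_P[THEN trans] sum.cong) auto
    thus ?thesis using True by simp
  next
    case False thus ?thesis using c by (simp add: sa_def Sym_def)
  qed
qed
lemma sa_mono_r: "m \<le> r \<Longrightarrow> sa r A B D (mono r) m = of_nat (r choose m) * B^(r-m) * D^m"
proof -
  assume "m \<le> r"
  have "sa r A B D (mono r) m = (\<Sum>i = m..r. if i = r then of_nat (r choose m) * B^(r-m) * D^m else 0)"
    unfolding sa_def using \<open>m \<le> r\<close> by (intro if_P[THEN trans] sum.cong) (auto simp: mono_def)
  thus ?thesis using \<open>m \<le> r\<close> by simp
qed
lemma sa_mono_0: "sa r A B D (mono 0) = (\<lambda>m. if m = 0 then A^r else 0)"
proof
  fix m show "sa r A B D (mono 0) m = (if m = 0 then A^r else 0)"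
  proof (cases "m = 0")
    case True
    have "sa r A B D (mono 0) m = (\<Sum>i = 0..r. if i = 0 then A^r else 0)"
      unfolding sa_def using True by (intro if_P[THEN trans] sum.cong) (auto simp: mono_def)
    thus ?thesis using True by simp
  next
    case False thus ?thesis unfolding sa_def by (auto simp: mono_def intro!: sum.neutral)
  qed
qed


definition one :: "'q::field tri" where "one = (1,0,1)"
definition binv :: "'q::field tri \<Rightarrow> 'q tri" where
  "binv x = (case x of (a,b,d) \<Rightarrow> (inverse a, - b * inverse a * inverse d, inverse d))"

lemma bmul_simp[simp]: "bmul (a,b,d) (a',b',d') = (a*a', a*b' + b*d', d*d')"
  by (simp add: bmul_def)
lemma bmul_assoc: "bmul (bmul x y) z = bmul x (bmul y z)"
  by (cases x; cases y; cases z) (simp add: algebra_simps)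
lemma bmul_one[simp]: "bmul x one = x" "bmul one x = x"
  by (cases x; simp add: one_def)+
lemma Bor_iff[simp]: "(a,b,d) \<in> Bor \<longleftrightarrow> a \<noteq> 0 \<and> d \<noteq> 0" by (simp add: Bor_def)
lemma one_Bor[simp]: "one \<in> Bor" by (simp add: one_def)
lemma Bor_mul: "x \<in> Bor \<Longrightarrow> y \<in> Bor \<Longrightarrow> bmul x y \<in> Bor"
  by (cases x; cases y) auto
lemma Bor_mul_iff: "y \<in> Bor \<Longrightarrow> bmul x y \<in> Bor \<longleftrightarrow> x \<in> Bor"
  by (cases x; cases y) auto
lemma Bor_mul_iff2: "x \<in> Bor \<Longrightarrow> bmul x y \<in> Bor \<longleftrightarrow> y \<in> Bor"
  by (cases x; cases y) auto
lemma binv_Bor: "x \<in> Bor \<Longrightarrow> binv x \<in> Bor"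
  by (cases x) (auto simp: binv_def)
lemma binv_r: "x \<in> Bor \<Longrightarrow> bmul x (binv x) = one"
  by (cases x) (auto simp: binv_def one_def field_simps)
lemma binv_l: "x \<in> Bor \<Longrightarrow> bmul (binv x) x = one"
  by (cases x) (auto simp: binv_def one_def field_simps)
lemma bmul_cancel_r: "y \<in> Bor \<Longrightarrow> bmul (bmul x y) (binv y) = x"
  by (simp add: bmul_assoc binv_r)
lemma bmul_cancel_r2: "y \<in> Bor \<Longrightarrow> bmul (bmul x (binv y)) y = x"
  by (simp add: bmul_assoc binv_l)
lemma bmul_cancel_l: "y \<in> Bor \<Longrightarrow> bmul (binv y) (bmul y x) = x"
  by (simp add: bmul_assoc[symmetric] binv_l)

context qp begin

lemma BKZ_iff: "(a,b,d) \<in> BKZ v \<longleftrightarrow> a \<noteq> 0 \<and> d \<noteq> 0 \<and> v a = v d \<and> vge v b (v d)"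
  by (simp add: BKZ_def)
lemma BKZ_Bor: "h \<in> BKZ v \<Longrightarrow> h \<in> Bor"
  by (cases h) (simp add: BKZ_iff)
lemma one_BKZ[simp]: "one \<in> BKZ v" by (simp add: one_def BKZ_iff v1 vge_def)

lemma BKZ_mul: assumes "h \<in> BKZ v" "h' \<in> BKZ v" shows "bmul h h' \<in> BKZ v"
proof -
  obtain a b d a' b' d' where h: "h = (a,b,d)" "h' = (a',b',d')" by (cases h; cases h')
  have c: "a \<noteq> 0" "d \<noteq> 0" "v a = v d" "vge v b (v d)" "a' \<noteq> 0" "d' \<noteq> 0" "v a' = v d'" "vge v b' (v d')"
    using assms h by (auto simp: BKZ_iff)
  have "vge v (a*b') (v d + v d')" using vge_mult[of a "v d" b' "v d'"] c by (simp add: vge_def)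
  moreover have "vge v (b*d') (v d + v d')" using vge_mult[of b "v d" d' "v d'"] c by (simp add: vge_def)
  ultimately have "vge v (a*b' + b*d') (v d + v d')" by (rule vge_add)
  thus ?thesis using c h by (simp add: BKZ_iff vmul)
qed

lemma BKZ_inv: assumes "h \<in> BKZ v" shows "binv h \<in> BKZ v"
proof -
  obtain a b d where h: "h = (a,b,d)" by (cases h)
  have c: "a \<noteq> 0" "d \<noteq> 0" "v a = v d" "vge v b (v d)" using assms h by (auto simp: BKZ_iff)
  have "vge v (- b * inverse a * inverse d) (v d + (- v a) + (- v d))"
    using vge_mult[OF vge_mult[of "-b" "v d" "inverse a" "- v a"], of "inverse d" "- v d"] c vinv
    by (simp add: vge_def vneg)
  thus ?thesis using c h by (simp add: BKZ_iff binv_def vinv)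
qed

lemma BKZ_mul_iff: "h \<in> BKZ v \<Longrightarrow> g \<in> Bor \<Longrightarrow> bmul h g \<in> BKZ v \<longleftrightarrow> g \<in> BKZ v"
  by (metis BKZ_Bor BKZ_inv BKZ_mul bmul_cancel_l)

lemma symact_sa: "symact p v r (a,b,d) c = sa r (red v (a * pp (- v d))) (red v (b * pp (- v d))) (red v (d * pp (- v d))) c"
  unfolding symact_def sa_def pp_def Let_def by simp

lemma BKZ_units: assumes "(a,b,d) \<in> BKZ v"
  shows "vge v (a * pp (- v d)) 0" "vge v (b * pp (- v d)) 0" "vge v (d * pp (- v d)) 0"
    "v (a * pp (- v d)) = 0" "v (d * pp (- v d)) = 0" "a * pp (- v d) \<noteq> 0" "d * pp (- v d) \<noteq> 0"
proof -
  have c: "a \<noteq> 0" "d \<noteq> 0" "v a = v d" "vge v b (v d)" using assms by (auto simp: BKZ_iff)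
  show "v (a * pp (- v d)) = 0" "v (d * pp (- v d)) = 0" "a * pp (- v d) \<noteq> 0" "d * pp (- v d) \<noteq> 0"
    using c by (simp_all add: vmul)
  thus "vge v (a * pp (- v d)) 0" "vge v (d * pp (- v d)) 0" by (simp_all add: vge_def)
  show "vge v (b * pp (- v d)) 0" using vge_mult[OF c(4), of "pp (- v d)" "- v d"] by (simp add: vge_def)
qed

lemma symact_comp: assumes k: "(of_nat p :: 'k::field) = 0" and h: "h1 \<in> BKZ v" "h2 \<in> BKZ v"
  shows "symact p v r (bmul h1 h2) (c :: nat \<Rightarrow> 'k) = symact p v r h1 (symact p v r h2 c)"
proof -
  obtain a1 b1 d1 a2 b2 d2 where hh: "h1 = (a1,b1,d1)" "h2 = (a2,b2,d2)" by (cases h1; cases h2)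
  define s1 where "s1 = pp (- v d1)"
  define s2 where "s2 = pp (- v d2)"
  have c: "d1 \<noteq> 0" "d2 \<noteq> 0" using h hh by (auto simp: BKZ_iff)
  have s12: "pp (- v (d1 * d2)) = s1 * s2" using c by (simp add: vmul s1_def s2_def pp_add[symmetric])
  note u1 = BKZ_units[OF h(1)[unfolded hh]] and u2 = BKZ_units[OF h(2)[unfolded hh]]
  have A: "(red v (a1 * a2 * (s1 * s2)) :: 'k) = red v (a1 * s1) * red v (a2 * s2)"
    using red_mult[OF k u1(1) u2(1)] s1_def s2_def by (simp add: mult_ac)
  have D: "(red v (d1 * d2 * (s1 * s2)) :: 'k) = red v (d1 * s1) * red v (d2 * s2)"
    using red_mult[OF k u1(3) u2(3)] s1_def s2_def by (simp add: mult_ac)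
  have "(a1 * b2 + b1 * d2) * (s1 * s2) = (a1 * s1) * (b2 * s2) + (b1 * s1) * (d2 * s2)"
    by (simp add: algebra_simps)
  hence B: "(red v ((a1 * b2 + b1 * d2) * (s1 * s2)) :: 'k) = red v (a1 * s1) * red v (b2 * s2) + red v (b1 * s1) * red v (d2 * s2)"
    using red_add[OF k vge_mult[OF u1(1) u2(2), simplified] vge_mult[OF u1(2) u2(3), simplified]]
      red_mult[OF k u1(1) u2(2)] red_mult[OF k u1(2) u2(3)] s1_def s2_def by simp
  show ?thesis unfolding hh bmul_simp symact_sa s12 A B D
    by (simp add: sa_comp s1_def s2_def)
qed

lemma symact_one: assumes k: "(of_nat p :: 'k::field) = 0" and "c \<in> Sym r"
  shows "symact p v r one (c :: nat \<Rightarrow> 'k) = c"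
proof -
  have "(red v (1::'q) :: 'k) = 1" "(red v (0::'q) :: 'k) = 0" using red_int[OF k, of 1] red_int[OF k, of 0] by simp_all
  thus ?thesis unfolding one_def symact_sa using assms(2) by (simp add: v1 pp_def sa_id)
qed

end

lemma sum_lessThan_plus: "(\<Sum>i<n+(n'::nat). h i) = (\<Sum>i<n. h i) + (\<Sum>i<n'. h (n+i))"
  by (induction n') (simp_all add: add_ac)

lemma kspan_form: "f \<in> kspan S \<longleftrightarrow> (\<exists>(n::nat) c u. (\<forall>i<n. u i \<in> S) \<and> f = fsum {..<n} (\<lambda>i. fsc (c i) (u i)))"
  unfolding kspan_def fsum_def fsc_def by simp

lemma kspan_0: "(\<lambda>g m. 0) \<in> kspan S"
  unfolding kspan_def by (rule CollectI, rule exI[of _ 0]) simp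

lemma kspan_base: "u \<in> S \<Longrightarrow> u \<in> kspan S"
  unfolding kspan_def by (rule CollectI, rule exI[of _ 1], rule exI[of _ "\<lambda>_. 1"], rule exI[of _ "\<lambda>_. u"]) simp

lemma kspan_add: assumes "f \<in> kspan S" "f' \<in> kspan S" shows "fadd f f' \<in> kspan S"
proof -
  obtain n :: nat and c u where f: "\<forall>i<n. u i \<in> S" "f = (\<lambda>g m. \<Sum>i<n. c i * u i g m)" using assms(1) unfolding kspan_def by blast
  obtain n' :: nat and c' u' where f': "\<forall>i<n'. u' i \<in> S" "f' = (\<lambda>g m. \<Sum>i<n'. c' i * u' i g m)" using assms(2) unfolding kspan_def by blast
  define C where "C i = (if i < n then c i else c' (i - n))" for i
  define U where "U i = (if i < n then u i else u' (i - n))" for i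
  have "\<forall>i<n+n'. U i \<in> S" using f f' U_def by auto
  moreover have "fadd f f' = (\<lambda>g m. \<Sum>i<n+n'. C i * U i g m)"
    unfolding fadd_def f f' sum_lessThan_plus by (simp add: C_def U_def)
  ultimately show ?thesis unfolding kspan_def
    by (intro CollectI exI[of _ "n+n'"] exI[of _ C] exI[of _ U] conjI)
qed

lemma kspan_sc: assumes "f \<in> kspan S" shows "fsc a f \<in> kspan S"
proof -
  obtain n :: nat and c u where f: "\<forall>i<n. u i \<in> S" "f = (\<lambda>g m. \<Sum>i<n. c i * u i g m)" using assms(1) unfolding kspan_def by blast
  have "fsc a f = (\<lambda>g m. \<Sum>i<n. (a * c i) * u i g m)" unfolding fsc_def f by (simp add: sum_distrib_left mult_ac)
  thus ?thesis using f unfolding kspan_def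
    by (intro CollectI exI[of _ n] exI[of _ "\<lambda>i. a * c i"] exI[of _ u] conjI)
qed

lemma kspan_fsum: assumes "\<forall>i\<in>I. u i \<in> kspan S" shows "fsum I u \<in> kspan S"
proof (cases "finite I")
  case True thus ?thesis using assms
  proof (induction I rule: finite_induct)
    case empty thus ?case using kspan_0 by (simp add: fsum_def)
  next
    case (insert x F)
    have "fsum (insert x F) u = fadd (u x) (fsum F u)" using insert by (simp add: fsum_def fadd_def)
    thus ?case using kspan_add[of "u x" S "fsum F u"] insert by simp
  qed
next
  case False thus ?thesis using kspan_0 by (simp add: fsum_def)
qed

lemma kspan_mono: assumes "S \<subseteq> kspan S'" shows "kspan S \<subseteq> kspan S'"
proof
  fix f assume "f \<in> kspan S"
  then obtain n :: nat and c u where f: "\<forall>i<n. u i \<in> S" "f = fsum {..<n} (\<lambda>i. fsc (c i) (u i))" unfolding kspan_form by blast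
  show "f \<in> kspan S'" unfolding f(2) using f(1) assms by (intro kspan_fsum) (auto intro: kspan_sc)
qed

lemma kspan_diff: assumes "f \<in> kspan S" "f' \<in> kspan S" shows "(\<lambda>g m. f g m - f' g m) \<in> kspan S"
proof -
  have "(\<lambda>g m. f g m - f' g m) = fadd f (fsc (-1) f')" by (simp add: fadd_def fsc_def)
  thus ?thesis using kspan_add kspan_sc assms by metis
qed

lemma bact_comp: "bact x (bact y f) = bact (bmul x y) f"
  by (simp add: bact_def bmul_assoc)
lemma bact_one: "bact one f = f" by (simp add: bact_def)
lemma bact_fadd: "bact x (fadd f f') = fadd (bact x f) (bact x f')" by (simp add: bact_def fadd_def)
lemma bact_fsc: "bact x (fsc c f) = fsc c (bact x f)" by (simp add: bact_def fsc_def)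
lemma bact_fsum: "bact x (fsum I F) = fsum I (\<lambda>i. bact x (F i))" by (simp add: bact_def fsum_def)

lemma kspan_bact: assumes "\<forall>u\<in>S. bact x u \<in> kspan S'" "f \<in> kspan S" shows "bact x f \<in> kspan S'"
proof -
  obtain n :: nat and c u where f: "\<forall>i<n. u i \<in> S" "f = fsum {..<n} (\<lambda>i. fsc (c i) (u i))" using assms(2) unfolding kspan_form by blast
  show ?thesis unfolding f(2) bact_fsum bact_fsc using f(1) assms(1) by (intro kspan_fsum) (auto intro: kspan_sc)
qed

definition subsp :: "nat \<Rightarrow> ('q::field \<Rightarrow> int) \<Rightarrow> nat \<Rightarrow> (nat \<Rightarrow> 'k::field) set \<Rightarrow> bool" where
  "subsp p v r W \<longleftrightarrow> (\<lambda>_. 0) \<in> W \<and> (\<forall>x\<in>W. \<forall>y\<in>W. (\<lambda>m. x m + y m) \<in> W) \<and> (\<forall>c. \<forall>x\<in>W. (\<lambda>m. c * x m) \<in> W)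
     \<and> (\<forall>h. \<forall>x\<in>W. symact p v r h x \<in> W)"

context qp begin

lemma symact_add: "symact p v r h (\<lambda>i. x i + y i) = (\<lambda>m. symact p v r h x m + symact p v r h y m)"
  by (cases h) (simp add: symact_sa sa_add)
lemma symact_scale: "symact p v r h (\<lambda>i. a * x i) = (\<lambda>m. a * symact p v r h x m)"
  by (cases h) (simp add: symact_sa sa_scale)
lemma symact_zero: "symact p v r h (\<lambda>i. 0) = (\<lambda>m. 0)"
  by (cases h) (simp add: symact_sa sa_zero)
lemma symact_sum: "symact p v r h (\<lambda>i. \<Sum>j\<in>S. c j i) = (\<lambda>m. \<Sum>j\<in>S. symact p v r h (c j) m)"
  by (cases h) (simp add: symact_sa sa_sum)

lemma symact_Sym: "symact p v r h x \<in> Sym r"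
  by (cases h) (simp add: symact_sa sa_Sym)
lemma symact_Line: "x \<in> Line \<Longrightarrow> symact p v r h x \<in> Line"
  by (cases h) (simp add: symact_sa sa_Line)
lemma subsp_Sym: "subsp p v r (Sym r)"
  unfolding subsp_def using symact_Sym by (simp add: Sym_def) blast
lemma subsp_Line: "subsp p v r Line"
  unfolding subsp_def using symact_Line by (simp add: Line_def) blast

lemma indI:
  assumes "\<And>g. f g \<in> W" "\<And>g. g \<notin> Bor \<Longrightarrow> f g = (\<lambda>_. 0)"
    "\<And>h g. h \<in> BKZ v \<Longrightarrow> g \<in> Bor \<Longrightarrow> f (bmul h g) = symact p v r h (f g)"
    "finite F" "F \<subseteq> Bor" "\<And>g. f g \<noteq> (\<lambda>_. 0) \<Longrightarrow> \<exists>h\<in>BKZ v. \<exists>x\<in>F. g = bmul h x"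
  shows "f \<in> ind p v r W"
  unfolding ind_def using assms by blast

lemma indE:
  assumes "f \<in> ind p v r W"
  obtains F where "\<And>g. f g \<in> W" "\<And>g. g \<notin> Bor \<Longrightarrow> f g = (\<lambda>_. 0)"
    "\<And>h g. h \<in> BKZ v \<Longrightarrow> g \<in> Bor \<Longrightarrow> f (bmul h g) = symact p v r h (f g)"
    "finite F" "F \<subseteq> Bor" "\<And>g. f g \<noteq> (\<lambda>_. 0) \<Longrightarrow> \<exists>h\<in>BKZ v. \<exists>x\<in>F. g = bmul h x"
  using assms unfolding ind_def by blast

lemma subspD: assumes "subsp p v r W"
  shows "(\<lambda>_. 0) \<in> W" "x \<in> W \<Longrightarrow> y \<in> W \<Longrightarrow> (\<lambda>m. x m + y m) \<in> W"
    "x \<in> W \<Longrightarrow> (\<lambda>m. c * x m) \<in> W" "x \<in> W \<Longrightarrow> symact p v r h x \<in> W"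
  using assms unfolding subsp_def by blast+

lemma ind_zero: assumes W: "subsp p v r W" shows "(\<lambda>g m. 0) \<in> ind p v r W"
  by (rule indI[where F="{}"]) (auto simp: symact_zero subspD[OF W])

lemma ind_fadd: assumes W: "subsp p v r W" and f: "f1 \<in> ind p v r W" "f2 \<in> ind p v r W"
  shows "fadd f1 f2 \<in> ind p v r W"
proof -
  obtain F1 where F1: "\<And>g. f1 g \<in> W" "\<And>g. g \<notin> Bor \<Longrightarrow> f1 g = (\<lambda>_. 0)"
    "\<And>h g. h \<in> BKZ v \<Longrightarrow> g \<in> Bor \<Longrightarrow> f1 (bmul h g) = symact p v r h (f1 g)"
    "finite F1" "F1 \<subseteq> Bor" "\<And>g. f1 g \<noteq> (\<lambda>_. 0) \<Longrightarrow> \<exists>h\<in>BKZ v. \<exists>x\<in>F1. g = bmul h x"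
    using indE[OF f(1)] by blast
  obtain F2 where F2: "\<And>g. f2 g \<in> W" "\<And>g. g \<notin> Bor \<Longrightarrow> f2 g = (\<lambda>_. 0)"
    "\<And>h g. h \<in> BKZ v \<Longrightarrow> g \<in> Bor \<Longrightarrow> f2 (bmul h g) = symact p v r h (f2 g)"
    "finite F2" "F2 \<subseteq> Bor" "\<And>g. f2 g \<noteq> (\<lambda>_. 0) \<Longrightarrow> \<exists>h\<in>BKZ v. \<exists>x\<in>F2. g = bmul h x"
    using indE[OF f(2)] by blast
  show ?thesis
  proof (rule indI[where F="F1 \<union> F2"])
    fix g show "fadd f1 f2 g \<in> W" unfolding fadd_def by (rule subspD(2)[OF W F1(1) F2(1)])
  next
    fix g :: "'q tri" assume "g \<notin> Bor" thus "fadd f1 f2 g = (\<lambda>_. 0)" using F1(2) F2(2) by (simp add: fadd_def)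
  next
    fix h g :: "'q tri" assume "h \<in> BKZ v" "g \<in> Bor"
    thus "fadd f1 f2 (bmul h g) = symact p v r h (fadd f1 f2 g)"
      using F1(3) F2(3) by (simp add: fadd_def symact_add)
  next
    fix g assume "fadd f1 f2 g \<noteq> (\<lambda>_. 0)"
    hence "f1 g \<noteq> (\<lambda>_. 0) \<or> f2 g \<noteq> (\<lambda>_. 0)" by (auto simp: fadd_def)
    thus "\<exists>h\<in>BKZ v. \<exists>x\<in>F1 \<union> F2. g = bmul h x" using F1(6) F2(6) by blast
  qed (use F1 F2 in auto)
qed

lemma ind_fsc: assumes W: "subsp p v r W" and f: "f \<in> ind p v r W"
  shows "fsc c f \<in> ind p v r W"
proof -
  obtain F where F: "\<And>g. f g \<in> W" "\<And>g. g \<notin> Bor \<Longrightarrow> f g = (\<lambda>_. 0)"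
    "\<And>h g. h \<in> BKZ v \<Longrightarrow> g \<in> Bor \<Longrightarrow> f (bmul h g) = symact p v r h (f g)"
    "finite F" "F \<subseteq> Bor" "\<And>g. f g \<noteq> (\<lambda>_. 0) \<Longrightarrow> \<exists>h\<in>BKZ v. \<exists>x\<in>F. g = bmul h x"
    using indE[OF f] by blast
  show ?thesis
  proof (rule indI[where F="F"])
    fix g show "fsc c f g \<in> W" unfolding fsc_def by (rule subspD(3)[OF W F(1)])
  next
    fix g :: "'q tri" assume "g \<notin> Bor" thus "fsc c f g = (\<lambda>_. 0)" using F(2) by (simp add: fsc_def)
  next
    fix h g :: "'q tri" assume "h \<in> BKZ v" "g \<in> Bor"
    thus "fsc c f (bmul h g) = symact p v r h (fsc c f g)"
      using F(3) by (simp add: fsc_def symact_scale)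
  next
    fix g assume "fsc c f g \<noteq> (\<lambda>_. 0)"
    hence "f g \<noteq> (\<lambda>_. 0)" by (auto simp: fsc_def)
    thus "\<exists>h\<in>BKZ v. \<exists>x\<in>F. g = bmul h x" using F(6) by blast
  qed (use F in auto)
qed

lemma ind_fsum: assumes W: "subsp p v r W" and f: "\<forall>i\<in>I. F i \<in> ind p v r W"
  shows "fsum I F \<in> ind p v r W"
proof (cases "finite I")
  case True thus ?thesis using f
  proof (induction I rule: finite_induct)
    case empty thus ?case using ind_zero[OF W] by (simp add: fsum_def)
  next
    case (insert x I)
    have "fsum (insert x I) F = fadd (F x) (fsum I F)" using insert by (simp add: fsum_def fadd_def)
    thus ?case using insert ind_fadd[OF W] by simp
  qed
next
  case False thus ?thesis using ind_zero[OF W] by (simp add: fsum_def)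
qed

lemma ind_lin: assumes W: "subsp p v r W" and f: "\<forall>i\<in>I. u i \<in> ind p v r W"
  shows "fsum I (\<lambda>i. fsc (c i) (u i)) \<in> ind p v r W"
  by (intro ind_fsum[OF W] ballI ind_fsc[OF W]) (use f in auto)

lemma ind_bact: assumes W: "subsp p v r W" and f: "f \<in> ind p v r W" and b: "b \<in> Bor"
  shows "bact b f \<in> ind p v r W"
proof -
  obtain F where F: "\<And>g. f g \<in> W" "\<And>g. g \<notin> Bor \<Longrightarrow> f g = (\<lambda>_. 0)"
    "\<And>h g. h \<in> BKZ v \<Longrightarrow> g \<in> Bor \<Longrightarrow> f (bmul h g) = symact p v r h (f g)"
    "finite F" "F \<subseteq> Bor" "\<And>g. f g \<noteq> (\<lambda>_. 0) \<Longrightarrow> \<exists>h\<in>BKZ v. \<exists>x\<in>F. g = bmul h x"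
    using indE[OF f] by blast
  show ?thesis
  proof (rule indI[where F="(\<lambda>x. bmul x (binv b)) ` F"])
    fix g show "bact b f g \<in> W" unfolding bact_def by (rule F(1))
  next
    fix g :: "'q tri" assume "g \<notin> Bor" thus "bact b f g = (\<lambda>_. 0)"
      using F(2) b Bor_mul_iff unfolding bact_def by blast
  next
    fix h g :: "'q tri" assume hg: "h \<in> BKZ v" "g \<in> Bor"
    hence "bmul g b \<in> Bor" using b Bor_mul by blast
    thus "bact b f (bmul h g) = symact p v r h (bact b f g)"
      using F(3)[OF hg(1)] unfolding bact_def by (simp add: bmul_assoc)
  next
    fix g assume "bact b f g \<noteq> (\<lambda>_. 0)"
    hence "f (bmul g b) \<noteq> (\<lambda>_. 0)" by (simp add: bact_def)
    then obtain h x where hx: "h \<in> BKZ v" "x \<in> F" "bmul g b = bmul h x" using F(6) by blast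
    hence "g = bmul h (bmul x (binv b))" using b by (metis bmul_assoc bmul_cancel_r)
    thus "\<exists>h\<in>BKZ v. \<exists>x\<in>(\<lambda>x. bmul x (binv b)) ` F. g = bmul h x" using hx by blast
  next
    show "(\<lambda>x. bmul x (binv b)) ` F \<subseteq> Bor" using F(5) b Bor_mul binv_Bor by blast
  qed (use F in auto)
qed

lemma ind_brk: assumes k: "(of_nat p :: 'k::field) = 0" and W: "subsp p v r W" and b: "b \<in> Bor" and w: "(w :: nat \<Rightarrow> 'k) \<in> W"
  shows "brk p v r b w \<in> ind p v r W"
proof -
  have sW: "\<forall>h. symact p v r h w \<in> W" "(\<lambda>_. 0) \<in> W" using W w unfolding subsp_def by blast+
  have vals: "\<forall>g. brk p v r b w g \<in> W" unfolding brk_def by (simp add: sW)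
  have out: "\<forall>g. g \<notin> Bor \<longrightarrow> brk p v r b w g = (\<lambda>_. 0)" unfolding brk_def by auto
  have eq: "\<forall>h\<in>BKZ v. \<forall>g\<in>Bor. brk p v r b w (bmul h g) = symact p v r h (brk p v r b w g)"
  proof (intro ballI)
    fix h g :: "'q tri" assume h: "h \<in> BKZ v" and g: "g \<in> Bor"
    have hg: "bmul h g \<in> Bor" using h g BKZ_Bor Bor_mul by blast
    have iff: "bmul (bmul h g) b \<in> BKZ v \<longleftrightarrow> bmul g b \<in> BKZ v"
      unfolding bmul_assoc using BKZ_mul_iff[OF h Bor_mul[OF g b]] .
    show "brk p v r b w (bmul h g) = symact p v r h (brk p v r b w g)"
    proof (cases "bmul g b \<in> BKZ v")
      case True thus ?thesis using iff hg g h unfolding brk_def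
        by (simp add: bmul_assoc symact_comp[OF k h True])
    next
      case False thus ?thesis using iff hg g unfolding brk_def by (simp add: symact_zero)
    qed
  qed
  have sup: "\<forall>g. brk p v r b w g \<noteq> (\<lambda>_. 0) \<longrightarrow> (\<exists>h\<in>BKZ v. \<exists>x\<in>{binv b}. g = bmul h x)"
  proof (intro allI impI)
    fix g :: "'q tri" assume "brk p v r b w g \<noteq> (\<lambda>_. 0)"
    hence "bmul g b \<in> BKZ v" unfolding brk_def by (auto split: if_splits)
    moreover have "g = bmul (bmul g b) (binv b)" using b by (simp add: bmul_cancel_r)
    ultimately show "\<exists>h\<in>BKZ v. \<exists>x\<in>{binv b}. g = bmul h x" by blast
  qed
  show ?thesis
    by (rule indI[where F="{binv b}"]) (use vals out eq sup b binv_Bor in blast)+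
qed

lemma brk_bact: assumes x: "x \<in> Bor" shows "bact x (brk p v r b w) = brk p v r (bmul x b) w"
  unfolding bact_def brk_def using x by (auto simp: bmul_assoc Bor_mul_iff)

lemma brk_one: "b \<in> Bor \<Longrightarrow> brk p v r b w = bact b (brk p v r one w)"
  using brk_bact[where x=b and b=one and w=w] by simp

lemma brk_comp: assumes k: "(of_nat p :: 'k::field) = 0" and b: "b \<in> Bor" and kap: "\<kappa> \<in> BKZ v"
  shows "brk p v r (bmul b \<kappa>) (w :: nat \<Rightarrow> 'k) = brk p v r b (symact p v r \<kappa> w)"
proof
  fix g
  have iff: "bmul g (bmul b \<kappa>) \<in> BKZ v \<longleftrightarrow> bmul g b \<in> BKZ v"
  proof
    assume "bmul g (bmul b \<kappa>) \<in> BKZ v"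
    hence "bmul (bmul g (bmul b \<kappa>)) (binv \<kappa>) \<in> BKZ v" using BKZ_mul BKZ_inv kap by blast
    thus "bmul g b \<in> BKZ v" using kap BKZ_Bor by (simp add: bmul_assoc[symmetric] bmul_cancel_r)
  next
    assume "bmul g b \<in> BKZ v"
    thus "bmul g (bmul b \<kappa>) \<in> BKZ v" using BKZ_mul kap by (simp add: bmul_assoc[symmetric])
  qed
  show "brk p v r (bmul b \<kappa>) w g = brk p v r b (symact p v r \<kappa> w) g"
    unfolding brk_def using iff by (auto simp: bmul_assoc[symmetric] symact_comp[OF k _ kap])
qed

lemma brk_scale: "brk p v r b (\<lambda>m. a * w m) = fsc a (brk p v r b w)"
  unfolding brk_def fsc_def by (auto simp: symact_scale)
lemma brk_vsc: "brk p v r b (vsc a w) = fsc a (brk p v r b w)"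
  unfolding vsc_def by (rule brk_scale)
lemma brk_sum: "brk p v r b (\<lambda>m. \<Sum>i\<in>S. c i * w i m) = fsum S (\<lambda>i. fsc (c i) (brk p v r b (w i)))"
  unfolding brk_def fsc_def fsum_def by (auto simp: symact_sum symact_scale)

lemma Sym_decomp: assumes "w \<in> Sym r" shows "w = (\<lambda>m. \<Sum>i\<le>r. w i * mono i m)"
proof
  fix m
  have "(\<Sum>i\<le>r. w i * mono i m) = (\<Sum>i\<le>r. if i = m then w i else 0)"
    by (rule sum.cong) (auto simp: mono_def)
  thus "w m = (\<Sum>i\<le>r. w i * mono i m)" using assms by (auto simp: Sym_def)
qed

lemma brk_decomp: "w \<in> Sym r \<Longrightarrow> brk p v r b w = fsum {..r} (\<lambda>i. fsc (w i) (brk p v r b (mono i)))"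
  by (subst Sym_decomp, assumption) (rule brk_sum)

end

locale Tloc = qp p v for p and v :: "'q::field_char_0 \<Rightarrow> int" +
  fixes r :: nat and T :: "('q tri \<Rightarrow> nat \<Rightarrow> 'k::field) \<Rightarrow> ('q tri \<Rightarrow> nat \<Rightarrow> 'k)" and J :: "'q set"
  assumes kchar: "(of_nat p :: 'k) = 0" and rle: "r \<le> p - 1"
    and T_ind: "\<forall>f\<in>ind p v r (Sym r). T f \<in> ind p v r (Sym r)"
    and T_add: "\<forall>f1\<in>ind p v r (Sym r). \<forall>f2\<in>ind p v r (Sym r). T (fadd f1 f2) = fadd (T f1) (T f2)"
    and T_smul: "\<forall>c. \<forall>f\<in>ind p v r (Sym r). T (fsc c f) = fsc c (T f)"
    and T_equiv: "\<forall>b\<in>Bor. \<forall>f\<in>ind p v r (Sym r). T (bact b f) = bact b (T f)"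
    and T_low: "\<forall>J'. repset p v J' \<longrightarrow> (\<forall>i<r.
        T (brk p v r (1, 0, 1) (mono i)) =
        fsum J' (\<lambda>j. brk p v r (of_nat p, j, 1) (vsc (red v (- j) ^ i) (mono 0))))"
    and T_top: "\<forall>J'. repset p v J' \<longrightarrow>
        T (brk p v r (1, 0, 1) (mono r)) =
        fadd (brk p v r (1, 0, of_nat p) (mono r))
             (fsum J' (\<lambda>j. brk p v r (of_nat p, j, 1) (vsc (red v (- j) ^ r) (mono 0))))"
    and J: "repset p v J"
begin

abbreviation "II \<equiv> (ind p v r (Sym r) :: ('q tri \<Rightarrow> nat \<Rightarrow> 'k) set)"
abbreviation "IL \<equiv> (ind p v r Line :: ('q tri \<Rightarrow> nat \<Rightarrow> 'k) set)"

lemma mono_Sym: "i \<le> r \<Longrightarrow> (mono i :: nat \<Rightarrow> 'k) \<in> Sym r" by (auto simp: Sym_def mono_def)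
lemma mono0_Line: "(mono 0 :: nat \<Rightarrow> 'k) \<in> Line" by (auto simp: Line_def mono_def)

lemma brk_II: "b \<in> Bor \<Longrightarrow> i \<le> r \<Longrightarrow> brk p v r b (mono i) \<in> II"
  by (rule ind_brk[OF kchar subsp_Sym _ mono_Sym])
lemma brk_IL: "b \<in> Bor \<Longrightarrow> brk p v r b (mono 0) \<in> IL"
  by (rule ind_brk[OF kchar subsp_Line _ mono0_Line])

lemma T_zero: "T (\<lambda>g m. 0) = (\<lambda>g m. 0)"
proof -
  have z: "(\<lambda>g m. 0) \<in> II" by (rule ind_zero[OF subsp_Sym])
  have "T (fsc 0 (\<lambda>g m. 0)) = fsc 0 (T (\<lambda>g m. 0))" using T_smul z by blast
  thus ?thesis by (simp add: fsc_def)
qed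

lemma T_lin: assumes "finite K" "\<forall>i\<in>K. u i \<in> II"
  shows "T (fsum K (\<lambda>i. fsc (c i) (u i))) = fsum K (\<lambda>i. fsc (c i) (T (u i)))"
  using assms
proof (induction K rule: finite_induct)
  case empty thus ?case using T_zero by (simp add: fsum_def)
next
  case (insert x K)
  have e: "fsum (insert x K) (\<lambda>i. fsc (c i) (u i)) = fadd (fsc (c x) (u x)) (fsum K (\<lambda>i. fsc (c i) (u i)))"
    using insert by (simp add: fsum_def fadd_def)
  have e2: "fsum (insert x K) (\<lambda>i. fsc (c i) (T (u i))) = fadd (fsc (c x) (T (u x))) (fsum K (\<lambda>i. fsc (c i) (T (u i))))"
    using insert by (simp add: fsum_def fadd_def)
  have m1: "fsc (c x) (u x) \<in> II" using insert.prems by (intro ind_fsc[OF subsp_Sym]) simp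
  have m2: "fsum K (\<lambda>i. fsc (c i) (u i)) \<in> II" using insert.prems by (intro ind_lin[OF subsp_Sym]) simp
  have "T (fsc (c x) (u x)) = fsc (c x) (T (u x))" using T_smul insert by simp
  thus ?case unfolding e e2 using T_add m1 m2 insert by simp
qed

lemma KT: assumes "S \<subseteq> II" "f \<in> kspan S" shows "f \<in> II" "T f \<in> kspan (T ` S)"
proof -
  obtain n :: nat and c u where f: "\<forall>i<n. u i \<in> S" "f = fsum {..<n} (\<lambda>i. fsc (c i) (u i))"
    using assms(2) unfolding kspan_form by blast
  show "f \<in> II" unfolding f(2) using f(1) assms(1) by (intro ind_lin[OF subsp_Sym]) auto
  have "T f = fsum {..<n} (\<lambda>i. fsc (c i) (T (u i)))" unfolding f(2) using f(1) assms(1) by (intro T_lin) auto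
  thus "T f \<in> kspan (T ` S)" unfolding kspan_form using f(1)
    by (intro exI[of _ n] exI[of _ c] exI[of _ "\<lambda>i. T (u i)"]) auto
qed

lemma KT2: assumes "S \<subseteq> II" "h \<in> kspan (T ` S)" shows "h \<in> T ` kspan S"
proof -
  obtain n :: nat and c u where f: "\<forall>i<n. u i \<in> T ` S" "h = fsum {..<n} (\<lambda>i. fsc (c i) (u i))"
    using assms(2) unfolding kspan_form by blast
  have "\<forall>i\<in>{..<n}. \<exists>w. w \<in> S \<and> u i = T w" using f(1) by blast
  from bchoice[OF this] obtain w where w': "\<forall>i\<in>{..<n}. w i \<in> S \<and> u i = T (w i)" by blast
  hence w: "\<forall>i<n. w i \<in> S \<and> u i = T (w i)" by simp
  have "fsum {..<n} (\<lambda>i. fsc (c i) (w i)) \<in> kspan S" unfolding kspan_form using w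
    by (intro exI[of _ n] exI[of _ c] exI[of _ w]) auto
  moreover have "T (fsum {..<n} (\<lambda>i. fsc (c i) (w i))) = h"
  proof -
    have "T (fsum {..<n} (\<lambda>i. fsc (c i) (w i))) = fsum {..<n} (\<lambda>i. fsc (c i) (T (w i)))"
      using w assms(1) by (intro T_lin) auto
    also have "\<dots> = fsum {..<n} (\<lambda>i. fsc (c i) (u i))" unfolding fsum_def fsc_def using w
      by (intro ext sum.cong) auto
    finally show ?thesis unfolding f(2) .
  qed
  ultimately show ?thesis by force
qed

lemma ind_kspan: assumes W: "subsp p v r W" and S: "S \<subseteq> ind p v r W" shows "kspan S \<subseteq> ind p v r W"
proof
  fix f assume "f \<in> kspan S"
  then obtain n :: nat and c u where f: "\<forall>i<n. u i \<in> S" "f = fsum {..<n} (\<lambda>i. fsc (c i) (u i))"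
    unfolding kspan_form by blast
  show "f \<in> ind p v r W" unfolding f(2) using f(1) S by (intro ind_lin[OF W]) auto
qed

definition H :: "nat \<Rightarrow> 'q tri \<Rightarrow> nat \<Rightarrow> 'k" where "H m = T (brk p v r one (mono m))"

lemma T_brk: "b \<in> Bor \<Longrightarrow> m \<le> r \<Longrightarrow> T (brk p v r b (mono m)) = bact b (H m)"
  unfolding H_def by (subst brk_one, assumption) (use T_equiv brk_II[OF one_Bor] in blast)

definition S2 :: "'q tri \<Rightarrow> nat \<Rightarrow> 'k" where
  "S2 = fsum J (\<lambda>j. fsc (red v (- j) ^ r) (brk p v r (of_nat p, j, 1) (mono 0)))"

lemma H_low: "m < r \<Longrightarrow> H m = fsum J (\<lambda>j. fsc (red v (- j) ^ m) (brk p v r (of_nat p, j, 1) (mono 0)))"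
  unfolding H_def one_def using T_low J by (simp add: brk_vsc)

lemma H_top: "H r = fadd (brk p v r (1, 0, of_nat p) (mono r)) S2"
  unfolding H_def one_def S2_def using T_top J by (simp add: brk_vsc)

lemma S2_IL: "S2 \<in> IL"
proof -
  have "\<forall>j. (of_nat p, j, 1) \<in> (Bor :: 'q tri set)" using p_nz by simp
  thus ?thesis unfolding S2_def using brk_IL by (intro ind_fsum[OF subsp_Line] ballI ind_fsc[OF subsp_Line]) blast
qed

end

context qp begin

definition cover :: "'q tri set \<Rightarrow> ('q tri \<Rightarrow> nat \<Rightarrow> 'k::field) \<Rightarrow> bool" where
  "cover F f \<longleftrightarrow> finite F \<and> F \<subseteq> Bor \<and> (\<forall>g. f g \<noteq> (\<lambda>_. 0) \<longrightarrow> (\<exists>h\<in>BKZ v. \<exists>x\<in>F. g = bmul h x))"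

lemma min_cover: assumes "cover F f"
  obtains F' where "cover F' f" "\<And>x y. x \<in> F' \<Longrightarrow> y \<in> F' \<Longrightarrow> bmul y (binv x) \<in> BKZ v \<Longrightarrow> x = y"
proof -
  define P where "P n \<longleftrightarrow> (\<exists>F'. cover F' f \<and> card F' = n)" for n
  have "P (card F)" using assms P_def by blast
  define n0 where "n0 = (LEAST n. P n)"
  have "P n0" unfolding n0_def by (rule LeastI[of P, OF \<open>P (card F)\<close>])
  then obtain F' where F': "cover F' f" "card F' = n0" unfolding P_def by blast
  have "x = y" if xy: "x \<in> F'" "y \<in> F'" "bmul y (binv x) \<in> BKZ v" for x y
  proof (rule ccontr)
    assume ne: "x \<noteq> y"
    let ?F = "F' - {y}"
    have c: "cover ?F f"
      unfolding cover_def
    proof (intro conjI allI impI)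
      show "finite ?F" "?F \<subseteq> Bor" using F'(1) unfolding cover_def by auto
      fix g assume "f g \<noteq> (\<lambda>_. 0)"
      then obtain h z where hz: "h \<in> BKZ v" "z \<in> F'" "g = bmul h z" using F'(1) unfolding cover_def by blast
      show "\<exists>h\<in>BKZ v. \<exists>x\<in>?F. g = bmul h x"
      proof (cases "z = y")
        case True
        have xB: "x \<in> Bor" using F'(1) xy unfolding cover_def by auto
        have "g = bmul (bmul h (bmul y (binv x))) x" using hz True xB by (simp add: bmul_assoc binv_l)
        moreover have "bmul h (bmul y (binv x)) \<in> BKZ v" using hz xy BKZ_mul by blast
        ultimately show ?thesis using xy ne by blast
      next
        case False thus ?thesis using hz by blast
      qed
    qed
    have fin: "finite F'" using F'(1) unfolding cover_def by blast
    have "card ?F < n0" using card_Diff1_less[OF fin xy(2)] F'(2) by simp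
    moreover have "P (card ?F)" using c P_def by blast
    ultimately show False using not_less_Least n0_def by blast
  qed
  thus ?thesis using that F'(1) by blast
qed

lemma decomp: assumes k: "(of_nat p :: 'k::field) = 0" and f: "(f :: 'q tri \<Rightarrow> nat \<Rightarrow> 'k) \<in> ind p v r (Sym r)"
  shows "f \<in> kspan {brk p v r b (mono i) | b i. b \<in> Bor \<and> i \<le> r}"
proof -
  obtain F where F: "\<And>g. f g \<in> Sym r" "\<And>g. g \<notin> Bor \<Longrightarrow> f g = (\<lambda>_. 0)"
    "\<And>h g. h \<in> BKZ v \<Longrightarrow> g \<in> Bor \<Longrightarrow> f (bmul h g) = symact p v r h (f g)"
    "finite F" "F \<subseteq> Bor" "\<And>g. f g \<noteq> (\<lambda>_. 0) \<Longrightarrow> \<exists>h\<in>BKZ v. \<exists>x\<in>F. g = bmul h x"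
    using indE[OF f] by blast
  have cF: "cover F f" unfolding cover_def using F by blast
  obtain F' where F': "cover F' f" "\<And>x y. x \<in> F' \<Longrightarrow> y \<in> F' \<Longrightarrow> bmul y (binv x) \<in> BKZ v \<Longrightarrow> x = y"
    using min_cover[OF cF] by blast
  have F'f: "finite F'" "F' \<subseteq> Bor" "\<And>g. f g \<noteq> (\<lambda>_. 0) \<Longrightarrow> \<exists>h\<in>BKZ v. \<exists>x\<in>F'. g = bmul h x"
    using F'(1) unfolding cover_def by blast+
  define t where "t x i = fsc (f x i) (brk p v r (binv x) (mono i))" for x i
  define RHS where "RHS = fsum F' (\<lambda>x. fsum {..r} (\<lambda>i. t x i))"
  have eq: "f = RHS"
  proof (intro ext)
    fix g m
    have RHSg: "RHS g m = (\<Sum>x\<in>F'. \<Sum>i\<le>r. f x i * brk p v r (binv x) (mono i) g m)"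
      unfolding RHS_def t_def fsum_def fsc_def by simp
    show "f g m = RHS g m"
    proof (cases "g \<in> Bor")
      case False
      thus ?thesis unfolding RHSg using F(2) by (simp add: brk_def)
    next
      case gB: True
      show ?thesis
      proof (cases "\<exists>x0\<in>F'. bmul g (binv x0) \<in> BKZ v")
        case True
        then obtain x0 where x0: "x0 \<in> F'" "bmul g (binv x0) \<in> BKZ v" by blast
        define h0 where "h0 = bmul g (binv x0)"
        have x0B: "x0 \<in> Bor" using x0 F'f by auto
        have g0: "g = bmul h0 x0" unfolding h0_def using x0B by (simp add: bmul_cancel_r2)
        have inner: "(\<Sum>i\<le>r. f x i * brk p v r (binv x) (mono i) g m) =
            (if x = x0 then (\<Sum>i\<le>r. f x0 i * symact p v r h0 (mono i) m) else 0)" if xF: "x \<in> F'" for x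
        proof (cases "bmul g (binv x) \<in> BKZ v")
          case True
          have xB: "x \<in> Bor" using xF F'f by auto
          have "x = bmul (binv (bmul g (binv x))) g"
            using xB BKZ_Bor[OF True] by (metis bmul_cancel_l bmul_cancel_r2)
          hence "bmul x (binv x0) = bmul (binv (bmul g (binv x))) h0" unfolding h0_def by (metis bmul_assoc)
          hence "bmul x (binv x0) \<in> BKZ v" using True x0 BKZ_mul BKZ_inv h0_def by metis
          hence "x0 = x" using F'(2)[OF x0(1) xF] by blast
          thus ?thesis using True gB unfolding h0_def brk_def by simp
        next
          case False
          hence "x \<noteq> x0" using x0 by blast
          thus ?thesis using False by (simp add: brk_def)
        qed
        have "RHS g m = (\<Sum>x\<in>F'. if x = x0 then (\<Sum>i\<le>r. f x0 i * symact p v r h0 (mono i) m) else 0)"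
          unfolding RHSg using inner by (intro sum.cong) auto
        also have "\<dots> = (\<Sum>i\<le>r. f x0 i * symact p v r h0 (mono i) m)" using x0 F'f by simp
        also have "\<dots> = symact p v r h0 (\<lambda>n. \<Sum>i\<le>r. f x0 i * mono i n) m"
          by (simp add: symact_sum symact_scale)
        also have "(\<lambda>n. \<Sum>i\<le>r. f x0 i * mono i n) = f x0" using Sym_decomp[OF F(1)[of x0]] by simp
        also have "symact p v r h0 (f x0) m = f g m" using F(3)[OF x0(2)[folded h0_def] x0B] g0 by simp
        finally show ?thesis by simp
      next
        case False
        have "f g = (\<lambda>_. 0)"
        proof (rule ccontr)
          assume "f g \<noteq> (\<lambda>_. 0)"
          then obtain h x where hx: "h \<in> BKZ v" "x \<in> F'" "g = bmul h x" using F'f(3) by blast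
          have "x \<in> Bor" using hx F'f by auto
          hence "bmul g (binv x) = h" using hx by (simp add: bmul_cancel_r)
          thus False using False hx by blast
        qed
        moreover have "RHS g m = 0" unfolding RHSg using False by (intro sum.neutral ballI) (auto simp: brk_def)
        ultimately show ?thesis by simp
      qed
    qed
  qed
  show ?thesis unfolding eq RHS_def
  proof (intro kspan_fsum ballI)
    fix x i assume "x \<in> F'" "i \<in> {..r}"
    hence "brk p v r (binv x) (mono i) \<in> {brk p v r b (mono i) | b i. b \<in> Bor \<and> i \<le> r}"
      using F'f binv_Bor by blast
    thus "t x i \<in> kspan {brk p v r b (mono i) | b i. b \<in> Bor \<and> i \<le> r}"
      unfolding t_def by (intro kspan_sc kspan_base)
  qed
qed

end

context Tloc begin

lemma H_r0: "r = 0 \<Longrightarrow> H 0 = fadd (brk p v r (1,0,of_nat p) (mono 0)) (fsum J (\<lambda>j. brk p v r (of_nat p, j, 1) (mono 0)))"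
  using H_top unfolding S2_def by (simp add: fsc_def)

theorem part0: assumes r0: "r = 0"
  shows "T ` II = kspan {bact b (fadd (brk p v r (1, 0, of_nat p) (mono 0))
                               (fsum J (\<lambda>j. brk p v r (of_nat p, j, 1) (mono 0)))) | b. b \<in> Bor}"
proof -
  define G0 where "G0 = {bact b (H 0) | b. b \<in> Bor}"
  have G0': "{bact b (fadd (brk p v r (1, 0, of_nat p) (mono 0))
                               (fsum J (\<lambda>j. brk p v r (of_nat p, j, 1) (mono 0)))) | b. b \<in> Bor} = G0"
    unfolding G0_def H_r0[OF r0] ..
  define S0 where "S0 = {brk p v r b (mono 0 :: nat \<Rightarrow> 'k) | b. b \<in> Bor}"
  have S0I: "S0 \<subseteq> II" unfolding S0_def using brk_II by auto
  have TS0: "T ` S0 = G0"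
  proof -
    have "S0 = (\<lambda>b. brk p v r b (mono 0)) ` Bor" unfolding S0_def by (rule Setcompr_eq_image)
    hence "T ` S0 = (\<lambda>b. T (brk p v r b (mono 0))) ` Bor" by (simp add: image_image)
    also have "\<dots> = (\<lambda>b. bact b (H 0)) ` Bor" by (rule image_cong) (simp_all add: T_brk)
    also have "\<dots> = G0" unfolding G0_def by (rule Setcompr_eq_image[symmetric])
    finally show ?thesis .
  qed
  show ?thesis unfolding G0'
  proof
    show "T ` II \<subseteq> kspan G0"
    proof
      fix y assume "y \<in> T ` II"
      then obtain f where f: "f \<in> II" "y = T f" by blast
      let ?G = "{brk p v r b (mono i) | b i. b \<in> Bor \<and> i \<le> r}"
      have "f \<in> kspan ?G" by (rule decomp[OF kchar f(1)])
      moreover have "?G \<subseteq> II" using brk_II by auto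
      ultimately have "T f \<in> kspan (T ` ?G)" using KT by blast
      moreover have "T ` ?G \<subseteq> kspan G0"
      proof
        fix z assume "z \<in> T ` ?G"
        then obtain b i where "b \<in> Bor" "i \<le> r" "z = T (brk p v r b (mono i))" by blast
        hence "z = bact b (H 0)" using T_brk r0 by simp
        thus "z \<in> kspan G0" using \<open>b \<in> Bor\<close> unfolding G0_def by (intro kspan_base) blast
      qed
      ultimately show "y \<in> kspan G0" using kspan_mono f(2) by blast
    qed
  next
    show "kspan G0 \<subseteq> T ` II"
    proof
      fix y assume "y \<in> kspan G0"
      hence "y \<in> T ` kspan S0" using KT2[OF S0I] TS0 by simp
      moreover have "kspan S0 \<subseteq> II" by (rule ind_kspan[OF subsp_Sym S0I])
      ultimately show "y \<in> T ` II" by blast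
    qed
  qed
qed

lemma choose_nz: assumes "m \<le> r" shows "(of_nat (r choose m) :: 'k) \<noteq> 0"
proof
  assume "(of_nat (r choose m) :: 'k) = 0"
  hence "CHAR('k) dvd (r choose m)" by (simp add: of_nat_eq_0_iff_char_dvd)
  hence "p dvd (r choose m)" using CHAR_k[OF kchar] by simp
  hence "p dvd fact r" using binomial_fact_lemma[OF assms] by (metis dvd_mult)
  hence "p \<le> r" using prime_dvd_fact_iff[OF prime_p] by simp
  thus False using rle p_pos by linarith
qed

definition Y :: "nat \<Rightarrow> 'q tri" where "Y i = (1, of_nat i / of_nat p, 1 / of_nat p)"
definition Dm :: "'q tri" where "Dm = (1, 0, of_nat p)"

lemma Y_Bor: "Y i \<in> Bor" unfolding Y_def using p_nz by simp
lemma Dm_Bor: "Dm \<in> Bor" unfolding Dm_def using p_nz by simp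

lemma YDm: "bmul (Y i) Dm = (1, of_nat i, 1)" unfolding Y_def Dm_def using p_nz by simp

lemma unip_BKZ: "((1, of_nat i, 1) :: 'q tri) \<in> BKZ v" by (simp add: BKZ_iff vge_nat v1)

lemma symact_unip: "m \<le> r \<Longrightarrow> symact p v r ((1, of_nat i, 1) :: 'q tri) (mono r) m = of_nat (r choose m) * (of_nat i :: 'k) ^ (r - m)"
proof -
  assume m: "m \<le> r"
  have "(red v (1::'q) :: 'k) = 1" using red_int[OF kchar, of 1] by simp
  moreover have "(red v (of_nat i :: 'q) :: 'k) = of_nat i" by (rule red_nat[OF kchar])
  ultimately show ?thesis by (simp add: symact_sa v1 pp_def sa_mono_r[OF m])
qed

definition cond :: "(nat \<Rightarrow> 'k) \<Rightarrow> bool" where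
  "cond lam \<longleftrightarrow> (\<forall>l<r. (\<Sum>i<p. of_nat i ^ l * lam i) = 0)"

lemma P2: assumes c: "cond lam"
  shows "fsum {..<p} (\<lambda>i. fsc (lam i) (bact (Y i) (H r))) =
    fadd (fsc (\<Sum>i<p. lam i * of_nat i ^ r) (brk p v r (1, 0, 1) (mono 0)))
         (fsum {..<p} (\<lambda>i. fsc (lam i) (bact (Y i) S2)))"
proof -
  have e1: "bact (Y i) (brk p v r (1, 0, of_nat p) (mono r :: nat \<Rightarrow> 'k)) = brk p v r one (symact p v r ((1, of_nat i, 1) :: 'q tri) (mono r))" for i
  proof -
    have "bact (Y i) (brk p v r (1, 0, of_nat p) (mono r :: nat \<Rightarrow> 'k)) = brk p v r (1, of_nat i, 1) (mono r)"
      using brk_bact[OF Y_Bor, where b="(1, 0, of_nat p)" and w="mono r"] YDm unfolding Dm_def by simp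
    also have "\<dots> = brk p v r one (symact p v r ((1, of_nat i, 1) :: 'q tri) (mono r))"
      using brk_comp[OF kchar one_Bor unip_BKZ, where r=r and w="mono r"] by simp
    finally show ?thesis .
  qed
  have vec: "(\<lambda>m. \<Sum>i<p. lam i * symact p v r ((1, of_nat i, 1) :: 'q tri) (mono r) m) =
      (\<lambda>m. (\<Sum>i<p. lam i * of_nat i ^ r) * mono 0 m)"
  proof
    fix m
    show "(\<Sum>i<p. lam i * symact p v r ((1, of_nat i, 1) :: 'q tri) (mono r) m) = (\<Sum>i<p. lam i * of_nat i ^ r) * mono 0 m"
    proof (cases "m \<le> r")
      case False
      have "\<forall>i. symact p v r ((1, of_nat i, 1) :: 'q tri) (mono r :: nat \<Rightarrow> 'k) m = 0"
      proof
        fix i show "symact p v r ((1, of_nat i, 1) :: 'q tri) (mono r :: nat \<Rightarrow> 'k) m = 0"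
          using symact_Sym[of r "(1, of_nat i, 1)" "mono r :: nat \<Rightarrow> 'k"] False unfolding Sym_def by simp
      qed
      moreover have "m \<noteq> 0" using False by simp
      ultimately show ?thesis by (simp add: mono_def)
    next
      case True
      have "(\<Sum>i<p. lam i * symact p v r ((1, of_nat i, 1) :: 'q tri) (mono r) m) =
          of_nat (r choose m) * (\<Sum>i<p. of_nat i ^ (r - m) * lam i)"
        using symact_unip[OF True] by (simp add: sum_distrib_left mult_ac)
      also have "\<dots> = (\<Sum>i<p. lam i * of_nat i ^ r) * mono 0 m"
      proof (cases "m = 0")
        case True thus ?thesis by (simp add: mono_def mult_ac)
      next
        case False
        hence "(\<Sum>i<p. of_nat i ^ (r - m) * lam i) = 0" using c unfolding cond_def using \<open>m \<le> r\<close> by simp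
        thus ?thesis using False by (simp add: mono_def)
      qed
      finally show ?thesis .
    qed
  qed
  have "fsum {..<p} (\<lambda>i. fsc (lam i) (bact (Y i) (brk p v r (1, 0, of_nat p) (mono r)))) =
      brk p v r one (\<lambda>m. \<Sum>i<p. lam i * symact p v r ((1, of_nat i, 1) :: 'q tri) (mono r) m)"
    unfolding e1 brk_sum ..
  also have "\<dots> = fsc (\<Sum>i<p. lam i * of_nat i ^ r) (brk p v r (1, 0, 1) (mono 0))"
    unfolding vec brk_scale one_def ..
  finally have main: "fsum {..<p} (\<lambda>i. fsc (lam i) (bact (Y i) (brk p v r (1, 0, of_nat p) (mono r)))) =
     fsc (\<Sum>i<p. lam i * of_nat i ^ r) (brk p v r (1, 0, 1) (mono 0))" .
  have "fsum {..<p} (\<lambda>i. fsc (lam i) (bact (Y i) (H r))) =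
      fadd (fsum {..<p} (\<lambda>i. fsc (lam i) (bact (Y i) (brk p v r (1, 0, of_nat p) (mono r)))))
           (fsum {..<p} (\<lambda>i. fsc (lam i) (bact (Y i) S2)))"
    unfolding H_top by (simp add: fsum_def fsc_def fadd_def bact_def sum.distrib distrib_left)
  thus ?thesis unfolding main .
qed

end

lemma binv_mul: "x \<in> Bor \<Longrightarrow> y \<in> Bor \<Longrightarrow> binv (bmul x y) = bmul (binv y) (binv x)"
  by (cases x; cases y) (auto simp: binv_def field_simps)
lemma binv_binv: "x \<in> Bor \<Longrightarrow> binv (binv x) = x"
  by (cases x) (auto simp: binv_def field_simps)

locale Mloc = Tloc p v r T J for p and v :: "'q::field_char_0 \<Rightarrow> int" and r
  and T :: "('q tri \<Rightarrow> nat \<Rightarrow> 'k::field) \<Rightarrow> ('q tri \<Rightarrow> nat \<Rightarrow> 'k)" and J +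
  fixes K :: "nat set" and bb :: "nat \<Rightarrow> 'q tri" and cc :: "nat \<Rightarrow> 'k"
  assumes finK: "finite K" and bB: "\<forall>k\<in>K. bb k \<in> Bor"
begin

definition e where "e k = bmul (bb k) Dm"
definition rel where "rel k l \<longleftrightarrow> bmul (binv (e l)) (e k) \<in> BKZ v"
definition rho where "rho k = (LEAST l. l \<in> K \<and> rel k l)"

lemma e_Bor: "k \<in> K \<Longrightarrow> e k \<in> Bor" unfolding e_def using bB Dm_Bor Bor_mul by blast

lemma rel_refl: assumes "k \<in> K" shows "rel k k" unfolding rel_def using binv_l[OF e_Bor[OF assms]] by simp
lemma rel_sym: assumes "k \<in> K" "l \<in> K" "rel k l" shows "rel l k"
proof -
  have "binv (bmul (binv (e l)) (e k)) = bmul (binv (e k)) (e l)"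
    using binv_mul[OF binv_Bor[OF e_Bor[OF assms(2)]] e_Bor[OF assms(1)]] binv_binv[OF e_Bor[OF assms(2)]] by simp
  thus ?thesis using assms BKZ_inv unfolding rel_def by metis
qed
lemma rel_trans: assumes "k \<in> K" "l \<in> K" "m \<in> K" "rel k l" "rel l m" shows "rel k m"
proof -
  have x: "bmul (e l) (bmul (binv (e l)) (e k)) = e k"
    by (simp add: bmul_assoc[symmetric] binv_r[OF e_Bor[OF assms(2)]])
  have "bmul (binv (e m)) (e k) = bmul (bmul (binv (e m)) (e l)) (bmul (binv (e l)) (e k))"
    by (simp add: bmul_assoc x)
  thus ?thesis using assms BKZ_mul unfolding rel_def by metis
qed

lemma rho: assumes "k \<in> K" shows "rho k \<in> K" "rel k (rho k)"
proof -
  have "\<exists>l. l \<in> K \<and> rel k l" using assms rel_refl by blast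
  hence "rho k \<in> K \<and> rel k (rho k)" unfolding rho_def by (rule LeastI_ex)
  thus "rho k \<in> K" "rel k (rho k)" by auto
qed

lemma rho_eq: assumes "k \<in> K" "l \<in> K" "rel k l" shows "rho k = rho l"
proof -
  have "(\<lambda>x. x \<in> K \<and> rel k x) = (\<lambda>x. x \<in> K \<and> rel l x)"
    using assms rel_sym rel_trans by blast
  thus ?thesis unfolding rho_def by simp
qed

lemma rho_idem: "k \<in> K \<Longrightarrow> rho (rho k) = rho k"
  using rho rel_sym rho_eq by metis

lemma rho_iff: assumes "k \<in> K" "k0 \<in> K" shows "rel k (rho k0) \<longleftrightarrow> rho k = rho k0"
proof
  assume "rel k (rho k0)"
  hence "rho k = rho (rho k0)" using rho_eq assms rho by blast
  thus "rho k = rho k0" using rho_idem assms by simp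
next
  assume "rho k = rho k0" thus "rel k (rho k0)" using rho assms by metis
qed

definition kap where "kap k = bmul (binv (e (rho k))) (e k)"
lemma kap_BKZ: "k \<in> K \<Longrightarrow> kap k \<in> BKZ v" unfolding kap_def using rho rel_def by blast
lemma e_kap: "k \<in> K \<Longrightarrow> e k = bmul (e (rho k)) (kap k)"
  unfolding kap_def using rho e_Bor by (simp add: bmul_assoc[symmetric] binv_r)

definition ka where "ka k = fst (kap k)"
definition kb where "kb k = fst (snd (kap k))"
definition kd where "kd k = snd (snd (kap k))"
lemma kap_eq: "kap k = (ka k, kb k, kd k)" by (simp add: ka_def kb_def kd_def)

lemma kap_props: assumes "k \<in> K"
  shows "ka k \<noteq> 0" "kd k \<noteq> 0" "v (ka k) = v (kd k)" "vge v (kb k) (v (kd k))"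
  using kap_BKZ[OF assms] unfolding kap_eq BKZ_iff by auto

definition tt where "tt k = kb k / kd k"
lemma tt_int: assumes "k \<in> K" shows "vge v (tt k) 0"
proof (cases "kb k = 0")
  case True thus ?thesis unfolding tt_def by simp
next
  case False thus ?thesis using kap_props[OF assms] unfolding tt_def vge_def by (simp add: vdiv)
qed

definition ik where "ik k = (SOME i. i < p \<and> (red v (tt k) :: 'k) = of_nat i)"
lemma ik: assumes "k \<in> K" shows "ik k < p" "(red v (tt k) :: 'k) = of_nat (ik k)"
proof -
  have "\<exists>i. i < p \<and> (red v (tt k) :: 'k) = of_nat i" using red_nat_rep[OF kchar tt_int[OF assms]] by blast
  hence "ik k < p \<and> (red v (tt k) :: 'k) = of_nat (ik k)" unfolding ik_def by (rule someI_ex)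
  thus "ik k < p" "(red v (tt k) :: 'k) = of_nat (ik k)" by auto
qed

definition sk where "sk k = pp (- v (kd k))"
definition Dk :: "nat \<Rightarrow> 'k" where "Dk k = red v (kd k * sk k)"

lemma red_kb: assumes "k \<in> K" shows "(red v (kb k * sk k) :: 'k) = of_nat (ik k) * Dk k"
proof -
  have eq: "kb k * sk k = tt k * (kd k * sk k)" using kap_props[OF assms] unfolding tt_def by simp
  have i: "vge v (kd k * sk k) 0" using BKZ_units(3)[OF kap_BKZ[OF assms, unfolded kap_eq]] unfolding sk_def .
  have "(red v (kb k * sk k) :: 'k) = red v (tt k * (kd k * sk k))" by (simp only: eq)
  also have "\<dots> = red v (tt k) * red v (kd k * sk k)" by (rule red_mult[OF kchar tt_int[OF assms] i])
  finally show ?thesis using ik[OF assms] unfolding Dk_def by simp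
qed

definition mu where "mu k = (ka k, (kb k - of_nat (ik k) * kd k) / of_nat p, kd k)"

lemma mu_BKZ: assumes "k \<in> K" shows "mu k \<in> BKZ v"
proof -
  note kp = kap_props[OF assms]
  have "(red v (tt k - of_nat (ik k)) :: 'k) = red v (tt k) - red v (of_nat (ik k) :: 'q)"
    by (rule red_diff[OF kchar tt_int[OF assms] vge_nat])
  also have "\<dots> = 0" using ik[OF assms] red_nat[OF kchar] by simp
  finally have "vge v (tt k - of_nat (ik k)) 1"
    using red_zero_iff[OF kchar vge_diff[OF tt_int[OF assms] vge_nat]] by simp
  hence a: "vge v (kd k * (tt k - of_nat (ik k))) (v (kd k) + 1)"
    using vge_mult[of "kd k" "v (kd k)" "tt k - of_nat (ik k)" 1] by (simp add: vge_def)
  have b: "vge v (inverse (of_nat p :: 'q)) (-1)" using vinv[OF p_nz] vp by (simp add: vge_def)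
  have "vge v (kd k * (tt k - of_nat (ik k)) * inverse (of_nat p)) (v (kd k) + 1 + -1)"
    by (rule vge_mult[OF a b])
  moreover have "kd k * (tt k - of_nat (ik k)) * inverse (of_nat p) = (kb k - of_nat (ik k) * kd k) / of_nat p"
    using kp(2) p_nz unfolding tt_def by (simp add: field_simps)
  ultimately show ?thesis unfolding mu_def BKZ_iff using kp by simp
qed

lemma bb_decomp: assumes "k \<in> K" shows "bb k = bmul (e (rho k)) (bmul (Y (ik k)) (mu k))"
proof -
  have "bb k = bmul (e k) (binv Dm)" unfolding e_def using Dm_Bor by (simp add: bmul_cancel_r)
  also have "\<dots> = bmul (e (rho k)) (bmul (kap k) (binv Dm))" using e_kap[OF assms] by (simp add: bmul_assoc)
  also have "bmul (kap k) (binv Dm) = bmul (Y (ik k)) (mu k)"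
    unfolding kap_eq Y_def mu_def Dm_def binv_def using p_nz kap_props[OF assms]
    by (simp add: field_simps)
  finally show ?thesis .
qed

lemma symact_mu_r: assumes "k \<in> K" shows "symact p v r (mu k) (mono r) r = Dk k ^ r"
  unfolding mu_def symact_sa Dk_def sk_def by (simp add: sa_mono_r)

lemma symact_kap: assumes "k \<in> K" "m \<le> r"
  shows "symact p v r (kap k) (mono r) m = of_nat (r choose m) * of_nat (ik k) ^ (r - m) * Dk k ^ r"
proof -
  have "symact p v r (kap k) (mono r) m = of_nat (r choose m) * (of_nat (ik k) * Dk k) ^ (r - m) * Dk k ^ m"
    unfolding kap_eq symact_sa using red_kb[OF assms(1)] unfolding sk_def Dk_def by (simp add: sa_mono_r[OF assms(2)])
  also have "\<dots> = of_nat (r choose m) * of_nat (ik k) ^ (r - m) * (Dk k ^ (r - m) * Dk k ^ m)"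
    by (simp add: power_mult_distrib mult_ac)
  also have "Dk k ^ (r - m) * Dk k ^ m = Dk k ^ r" using assms(2) by (simp add: power_add[symmetric])
  finally show ?thesis .
qed

end

lemma fsum_cong: "(\<And>k. k \<in> K \<Longrightarrow> F k = G k) \<Longrightarrow> fsum K F = fsum K G"
  unfolding fsum_def by (intro ext sum.cong) auto

context Tloc begin

definition set1 :: "('q tri \<Rightarrow> nat \<Rightarrow> 'k) set" where
  "set1 = {bact b (fsum J (\<lambda>j. fsc (red v (- j) ^ i) (brk p v r (of_nat p, j, 1) (mono 0))))
                    | b i. b \<in> Bor \<and> i < r}"
definition set2 :: "('q tri \<Rightarrow> nat \<Rightarrow> 'k) set" where
  "set2 = {bact b (fadd (fsc (\<Sum>i<p. lam i * of_nat i ^ r) (brk p v r (1, 0, 1) (mono 0)))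
                                (fsum {..<p} (\<lambda>i. fsc (lam i)
                                   (bact (1, of_nat i / of_nat p, 1 / of_nat p)
                                     (fsum J (\<lambda>j. fsc (red v (- j) ^ r) (brk p v r (of_nat p, j, 1) (mono 0))))))))
                    | b lam. b \<in> Bor \<and> (\<forall>l<r. (\<Sum>i<p. of_nat i ^ l * lam i) = 0)}"

lemma set1_H: assumes "b \<in> Bor" "m < r" shows "bact b (H m) \<in> set1"
  unfolding set1_def H_low[OF assms(2)] using assms by blast

lemma set2_H: assumes "b \<in> Bor" "cond lam"
  shows "bact b (fsum {..<p} (\<lambda>i. fsc (lam i) (bact (Y i) (H r)))) \<in> set2"
  unfolding set2_def P2[OF assms(2)] using assms unfolding Y_def S2_def cond_def by blast

end

context Mloc begin

definition Z where "Z k = bmul (e (rho k)) (Y (ik k))"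
definition W :: "nat \<Rightarrow> nat \<Rightarrow> 'k" where "W k = symact p v r (mu k) (mono r)"

lemma Z_Bor: "k \<in> K \<Longrightarrow> Z k \<in> Bor"
  unfolding Z_def using e_Bor rho Y_Bor Bor_mul by blast

lemma perk: assumes k: "k \<in> K"
  shows "bact (bb k) (H r) = fadd (fsc (Dk k ^ r) (bact (Z k) (H r))) (fsum {..<r} (\<lambda>m. fsc (W k m) (bact (Z k) (H m))))"
proof -
  have mK: "mu k \<in> BKZ v" by (rule mu_BKZ[OF k])
  have mB: "mu k \<in> Bor" using BKZ_Bor[OF mK] .
  have WS: "W k \<in> Sym r" unfolding W_def by (rule symact_Sym)
  have b1: "bact (mu k) (brk p v r one (mono r :: nat \<Rightarrow> 'k)) = brk p v r one (W k)"
  proof -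
    have "bact (mu k) (brk p v r one (mono r :: nat \<Rightarrow> 'k)) = brk p v r (bmul one (mu k)) (mono r)"
      using brk_bact[OF mB, where b=one and w="mono r :: nat \<Rightarrow> 'k"] by simp
    also have "\<dots> = brk p v r one (W k)" unfolding W_def by (rule brk_comp[OF kchar one_Bor mK])
    finally show ?thesis .
  qed
  have "bact (mu k) (H r) = T (bact (mu k) (brk p v r one (mono r)))"
    unfolding H_def using T_equiv mB brk_II[OF one_Bor le_refl] by simp
  also have "\<dots> = T (fsum {..r} (\<lambda>m. fsc (W k m) (brk p v r one (mono m))))"
    unfolding b1 brk_decomp[OF WS] ..
  also have "\<dots> = fsum {..r} (\<lambda>m. fsc (W k m) (H m))"
    unfolding H_def by (rule T_lin) (auto intro: brk_II[OF one_Bor])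
  finally have 1: "bact (mu k) (H r) = fsum {..r} (\<lambda>m. fsc (W k m) (H m))" .
  have "bb k = bmul (Z k) (mu k)" unfolding Z_def using bb_decomp[OF k] by (simp add: bmul_assoc)
  hence "bact (bb k) (H r) = bact (Z k) (bact (mu k) (H r))" by (simp add: bact_comp)
  also have "\<dots> = fsum {..r} (\<lambda>m. fsc (W k m) (bact (Z k) (H m)))" unfolding 1 bact_fsum bact_fsc ..
  also have "\<dots> = fadd (fsc (W k r) (bact (Z k) (H r))) (fsum {..<r} (\<lambda>m. fsc (W k m) (bact (Z k) (H m))))"
    unfolding fsum_def fadd_def by (simp add: lessThan_Suc_atMost[symmetric] add.commute)
  finally show ?thesis unfolding W_def symact_mu_r[OF k] .
qed

definition lam :: "nat \<Rightarrow> nat \<Rightarrow> 'k" where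
  "lam a i = (\<Sum>k\<in>{k\<in>K. rho k = a \<and> ik k = i}. cc k * Dk k ^ r)"

lemma cond_lam: assumes NL: "\<forall>g m. 1 \<le> m \<longrightarrow> fsum K (\<lambda>k. fsc (cc k) (brk p v r (e k) (mono r))) g m = 0"
  and a: "a \<in> rho ` K" shows "cond (lam a)"
  unfolding cond_def
proof (intro allI impI)
  fix l assume l: "l < r"
  obtain k0 where k0: "k0 \<in> K" "a = rho k0" using a by blast
  have aK: "a \<in> K" using rho k0 by blast
  define g0 where "g0 = binv (e a)"
  define m where "m = r - l"
  have m: "1 \<le> m" "m \<le> r" "r - m = l" using l unfolding m_def by auto
  have g0B: "g0 \<in> Bor" unfolding g0_def using binv_Bor e_Bor aK by blast
  have trm: "cc k * brk p v r (e k) (mono r) g0 m =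
      (if rho k = a then cc k * (of_nat (r choose m) * of_nat (ik k) ^ l * Dk k ^ r) else 0)" if kK: "k \<in> K" for k
  proof (cases "rho k = a")
    case True
    have "bmul g0 (e k) = kap k" unfolding g0_def kap_def True ..
    moreover have "bmul g0 (e k) \<in> BKZ v" using kap_BKZ[OF kK] calculation by simp
    ultimately show ?thesis using True g0B symact_kap[OF kK m(2)] m(3) unfolding brk_def by simp
  next
    case False
    have "\<not> rel k (rho k0)" using rho_iff[OF kK k0(1)] False k0(2) by simp
    hence "bmul g0 (e k) \<notin> BKZ v" unfolding rel_def g0_def k0(2) .
    thus ?thesis using False unfolding brk_def by simp
  qed
  have "fsum K (\<lambda>k. fsc (cc k) (brk p v r (e k) (mono r))) g0 m = 0" using NL m(1) by blast
  hence "0 = (\<Sum>k\<in>K. cc k * brk p v r (e k) (mono r) g0 m)" unfolding fsum_def fsc_def by simp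
  also have "\<dots> = (\<Sum>k\<in>K. if rho k = a then cc k * (of_nat (r choose m) * of_nat (ik k) ^ l * Dk k ^ r) else 0)"
    using trm by (intro sum.cong) auto
  also have "\<dots> = (\<Sum>k\<in>{k\<in>K. rho k = a}. cc k * (of_nat (r choose m) * of_nat (ik k) ^ l * Dk k ^ r))"
    by (simp add: sum.inter_filter[OF finK, symmetric])
  also have "\<dots> = (\<Sum>i<p. \<Sum>k\<in>{x\<in>{k\<in>K. rho k = a}. ik x = i}. cc k * (of_nat (r choose m) * of_nat (ik k) ^ l * Dk k ^ r))"
    by (rule sum.group[symmetric]) (use finK ik in auto)
  also have "\<dots> = (\<Sum>i<p. of_nat (r choose m) * (of_nat i ^ l * lam a i))"
  proof (rule sum.cong[OF refl])
    fix i
    have s: "{x\<in>{k\<in>K. rho k = a}. ik x = i} = {k\<in>K. rho k = a \<and> ik k = i}" by auto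
    show "(\<Sum>k\<in>{x\<in>{k\<in>K. rho k = a}. ik x = i}. cc k * (of_nat (r choose m) * of_nat (ik k) ^ l * Dk k ^ r))
        = of_nat (r choose m) * (of_nat i ^ l * lam a i)"
      unfolding s lam_def by (simp add: sum_distrib_left mult_ac)
  qed
  also have "\<dots> = of_nat (r choose m) * (\<Sum>i<p. of_nat i ^ l * lam a i)" by (simp add: sum_distrib_left)
  finally show "(\<Sum>i<p. of_nat i ^ l * lam a i) = 0" using choose_nz[OF m(2)] by simp
qed

lemma M: assumes NL: "\<forall>g m. 1 \<le> m \<longrightarrow> fsum K (\<lambda>k. fsc (cc k) (brk p v r (e k) (mono r))) g m = 0"
  shows "fsum K (\<lambda>k. fsc (cc k) (bact (bb k) (H r))) \<in> kspan (set1 \<union> set2)"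
proof -
  define A where "A = fsum K (\<lambda>k. fsc (cc k * Dk k ^ r) (bact (Z k) (H r)))"
  define B where "B = fsum K (\<lambda>k. fsc (cc k) (fsum {..<r} (\<lambda>m. fsc (W k m) (bact (Z k) (H m)))))"
  have eq: "fsum K (\<lambda>k. fsc (cc k) (bact (bb k) (H r))) = fadd A B"
  proof -
    have "fsum K (\<lambda>k. fsc (cc k) (bact (bb k) (H r))) =
       fsum K (\<lambda>k. fsc (cc k) (fadd (fsc (Dk k ^ r) (bact (Z k) (H r))) (fsum {..<r} (\<lambda>m. fsc (W k m) (bact (Z k) (H m))))))"
      using perk by (intro fsum_cong) simp
    thus ?thesis unfolding A_def B_def by (simp add: fsum_def fsc_def fadd_def sum.distrib distrib_left mult.assoc)
  qed
  have Bk: "B \<in> kspan (set1 \<union> set2)"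
    unfolding B_def
  proof (intro kspan_fsum ballI kspan_sc)
    fix k m assume k: "k \<in> K" and m: "m \<in> {..<r}"
    have "bact (Z k) (H m) \<in> set1" using set1_H Z_Bor[OF k] m by simp
    thus "bact (Z k) (H m) \<in> kspan (set1 \<union> set2)" by (intro kspan_base) simp
  qed
  define R where "R = rho ` K"
  have A2: "A = fsum R (\<lambda>a. bact (e a) (fsum {..<p} (\<lambda>i. fsc (lam a i) (bact (Y i) (H r)))))"
  proof (intro ext)
    fix g m
    define X where "X a i = H r (bmul g (bmul (e a) (Y i))) m" for a i
    have "A g m = (\<Sum>k\<in>K. cc k * Dk k ^ r * X (rho k) (ik k))"
      unfolding A_def X_def Z_def fsum_def fsc_def bact_def ..
    also have "\<dots> = (\<Sum>y\<in>R \<times> {..<p}. \<Sum>k\<in>{x\<in>K. (rho x, ik x) = y}. cc k * Dk k ^ r * X (rho k) (ik k))"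
      by (rule sum.group[symmetric]) (use finK ik in \<open>auto simp: R_def\<close>)
    also have "\<dots> = (\<Sum>y\<in>R \<times> {..<p}. lam (fst y) (snd y) * X (fst y) (snd y))"
    proof (rule sum.cong[OF refl])
      fix y :: "nat \<times> nat"
      obtain a i where y: "y = (a, i)" by (cases y)
      have s: "{x\<in>K. (rho x, ik x) = y} = {k\<in>K. rho k = a \<and> ik k = i}" unfolding y by auto
      show "(\<Sum>k\<in>{x\<in>K. (rho x, ik x) = y}. cc k * Dk k ^ r * X (rho k) (ik k)) = lam (fst y) (snd y) * X (fst y) (snd y)"
        unfolding s lam_def y by (simp add: sum_distrib_right)
    qed
    also have "\<dots> = (\<Sum>a\<in>R. \<Sum>i<p. lam a i * X a i)"
      by (simp add: sum.cartesian_product case_prod_beta')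
    also have "\<dots> = fsum R (\<lambda>a. bact (e a) (fsum {..<p} (\<lambda>i. fsc (lam a i) (bact (Y i) (H r))))) g m"
      unfolding X_def fsum_def fsc_def bact_def by (simp add: bmul_assoc)
    finally show "A g m = fsum R (\<lambda>a. bact (e a) (fsum {..<p} (\<lambda>i. fsc (lam a i) (bact (Y i) (H r))))) g m" .
  qed
  have Ak: "A \<in> kspan (set1 \<union> set2)"
    unfolding A2
  proof (intro kspan_fsum ballI)
    fix a assume a: "a \<in> R"
    have "a \<in> K" using a rho unfolding R_def by blast
    hence "bact (e a) (fsum {..<p} (\<lambda>i. fsc (lam a i) (bact (Y i) (H r)))) \<in> set2"
      using set2_H e_Bor cond_lam[OF NL] a unfolding R_def by blast
    thus "bact (e a) (fsum {..<p} (\<lambda>i. fsc (lam a i) (bact (Y i) (H r)))) \<in> kspan (set1 \<union> set2)"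
      by (intro kspan_base) simp
  qed
  show ?thesis unfolding eq using kspan_add Ak Bk by blast
qed

end

context Tloc begin
lemma M': fixes K :: "nat set" and c :: "nat \<Rightarrow> 'k" assumes "finite K" "\<forall>k\<in>K. bq k \<in> Bor"
   "\<forall>g m. 1 \<le> m \<longrightarrow> fsum K (\<lambda>k. fsc (c k) (brk p v r (bmul (bq k) Dm) (mono r))) g m = 0"
  shows "fsum K (\<lambda>k. fsc (c k) (bact (bq k) (H r))) \<in> kspan (set1 \<union> set2)"
proof -
  interpret Mloc p v r T J K bq c by unfold_locales (use assms in auto)
  show ?thesis using M assms(3) unfolding e_def by blast
qed

lemma IL_vals: assumes "f \<in> IL" "1 \<le> m" shows "f g m = 0"
proof -
  obtain F where "\<And>g. f g \<in> Line" using indE[OF assms(1)] by blast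
  thus ?thesis using assms(2) unfolding Line_def by blast
qed

lemma set1_IL: "set1 \<subseteq> IL"
proof
  fix x assume "x \<in> set1"
  then obtain b i where bi: "b \<in> Bor" "x = bact b (fsum J (\<lambda>j. fsc (red v (- j) ^ i) (brk p v r (of_nat p, j, 1) (mono 0))))"
    unfolding set1_def by blast
  have "\<forall>j. (of_nat p, j, 1) \<in> (Bor :: 'q tri set)" using p_nz by simp
  hence "fsum J (\<lambda>j. fsc (red v (- j) ^ i) (brk p v r (of_nat p, j, 1) (mono 0 :: nat \<Rightarrow> 'k))) \<in> IL"
    using brk_IL by (intro ind_fsum[OF subsp_Line] ballI ind_fsc[OF subsp_Line]) blast
  thus "x \<in> IL" unfolding bi(2) by (rule ind_bact[OF subsp_Line _ bi(1)])
qed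

lemma Y_Bor': "((1, of_nat i / of_nat p, 1 / of_nat p) :: 'q tri) \<in> Bor" using Y_Bor unfolding Y_def .

lemma set2_IL: "set2 \<subseteq> IL"
proof
  fix x assume "x \<in> set2"
  then obtain b lam where bl: "b \<in> Bor" "x = bact b (fadd (fsc (\<Sum>i<p. lam i * of_nat i ^ r) (brk p v r (1, 0, 1) (mono 0)))
                                (fsum {..<p} (\<lambda>i. fsc (lam i) (bact (1, of_nat i / of_nat p, 1 / of_nat p) S2))))"
    unfolding set2_def S2_def by blast
  have "fadd (fsc (\<Sum>i<p. lam i * of_nat i ^ r) (brk p v r (1, 0, 1) (mono 0)))
                                (fsum {..<p} (\<lambda>i. fsc (lam i) (bact (1, of_nat i / of_nat p, 1 / of_nat p) S2))) \<in> IL"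
    using brk_IL[of "(1,0,1)"] S2_IL Y_Bor'
    by (intro ind_fadd[OF subsp_Line] ind_fsc[OF subsp_Line] ind_fsum[OF subsp_Line] ballI ind_bact[OF subsp_Line]) auto
  thus "x \<in> IL" unfolding bl(2) by (rule ind_bact[OF subsp_Line _ bl(1)])
qed

lemma gens_T: "set1 \<union> set2 \<subseteq> T ` II"
proof
  fix x assume "x \<in> set1 \<union> set2"
  thus "x \<in> T ` II"
  proof
    assume "x \<in> set1"
    then obtain b i where bi: "b \<in> Bor" "i < r" "x = bact b (fsum J (\<lambda>j. fsc (red v (- j) ^ i) (brk p v r (of_nat p, j, 1) (mono 0))))"
      unfolding set1_def by blast
    have "x = bact b (T (brk p v r one (mono i)))" unfolding bi(3) H_low[OF bi(2), symmetric] H_def ..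
    also have "\<dots> = T (bact b (brk p v r one (mono i)))" using T_equiv bi(1) brk_II[OF one_Bor] bi(2) by simp
    finally show ?thesis using ind_bact[OF subsp_Sym brk_II[OF one_Bor] bi(1)] bi(2) by auto
  next
    assume "x \<in> set2"
    then obtain b lam where bl: "b \<in> Bor" "cond lam" "x = bact b (fadd (fsc (\<Sum>i<p. lam i * of_nat i ^ r) (brk p v r (1, 0, 1) (mono 0)))
                                (fsum {..<p} (\<lambda>i. fsc (lam i) (bact (Y i) S2))))"
      unfolding set2_def S2_def cond_def Y_def by blast
    define U where "U = fsum {..<p} (\<lambda>i. fsc (lam i) (bact (Y i) (brk p v r one (mono r))))"
    have bI: "bact (Y i) (brk p v r one (mono r)) \<in> II" for i
      by (rule ind_bact[OF subsp_Sym brk_II[OF one_Bor le_refl] Y_Bor])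
    have UI: "U \<in> II" unfolding U_def using bI by (intro ind_lin[OF subsp_Sym]) auto
    have "T U = fsum {..<p} (\<lambda>i. fsc (lam i) (T (bact (Y i) (brk p v r one (mono r)))))"
      unfolding U_def using bI by (intro T_lin) auto
    also have "\<dots> = fsum {..<p} (\<lambda>i. fsc (lam i) (bact (Y i) (H r)))"
      unfolding H_def using T_equiv Y_Bor brk_II[OF one_Bor le_refl] by simp
    finally have TU: "T U = fsum {..<p} (\<lambda>i. fsc (lam i) (bact (Y i) (H r)))" .
    have "x = bact b (T U)" unfolding bl(3) TU P2[OF bl(2)] ..
    also have "\<dots> = T (bact b U)" using T_equiv bl(1) UI by simp
    finally show ?thesis using ind_bact[OF subsp_Sym UI bl(1)] by auto
  qed
qed

theorem part1: assumes r1: "1 \<le> r" shows "T ` II \<inter> IL = kspan (set1 \<union> set2)"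
proof
  show "kspan (set1 \<union> set2) \<subseteq> T ` II \<inter> IL"
  proof
    fix y assume y: "y \<in> kspan (set1 \<union> set2)"
    have "y \<in> IL" using ind_kspan[OF subsp_Line] set1_IL set2_IL y by blast
    moreover have "y \<in> T ` II"
    proof -
      define S where "S = {u \<in> II. T u \<in> set1 \<union> set2}"
      have SI: "S \<subseteq> II" unfolding S_def by blast
      have "set1 \<union> set2 \<subseteq> T ` S" using gens_T unfolding S_def by blast
      hence "set1 \<union> set2 \<subseteq> kspan (T ` S)" using kspan_base by blast
      hence "y \<in> kspan (T ` S)" using kspan_mono y by blast
      hence "y \<in> T ` kspan S" by (rule KT2[OF SI])
      thus ?thesis using ind_kspan[OF subsp_Sym SI] by blast
    qed
    ultimately show "y \<in> T ` II \<inter> IL" by blast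
  qed
next
  show "T ` II \<inter> IL \<subseteq> kspan (set1 \<union> set2)"
  proof
    fix y assume y: "y \<in> T ` II \<inter> IL"
    then obtain f where f: "f \<in> II" "y = T f" by blast
    have yIL: "T f \<in> IL" using y f by simp
    have "f \<in> kspan {brk p v r b (mono i) | b i. b \<in> Bor \<and> i \<le> r}" by (rule decomp[OF kchar f(1)])
    then obtain n :: nat and c u where nu: "\<forall>k<n. u k \<in> {brk p v r b (mono i) | b i. b \<in> Bor \<and> i \<le> r}"
      "f = fsum {..<n} (\<lambda>k. fsc (c k) (u k))" unfolding kspan_form by blast
    have "\<forall>k\<in>{..<n}. \<exists>bi. fst bi \<in> Bor \<and> snd bi \<le> r \<and> u k = brk p v r (fst bi) (mono (snd bi))"
      using nu(1) by fastforce
    from bchoice[OF this] obtain bi where bi: "\<forall>k\<in>{..<n}. fst (bi k) \<in> Bor \<and> snd (bi k) \<le> r \<and> u k = brk p v r (fst (bi k)) (mono (snd (bi k)))"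
      by blast
    define bq where "bq k = fst (bi k)" for k
    define iq where "iq k = snd (bi k)" for k
    have bqi: "\<And>k. k < n \<Longrightarrow> bq k \<in> Bor \<and> iq k \<le> r \<and> u k = brk p v r (bq k) (mono (iq k))"
      using bi unfolding bq_def iq_def by simp
    have Tf: "T f = fsum {..<n} (\<lambda>k. fsc (c k) (bact (bq k) (H (iq k))))"
    proof -
      have "T f = fsum {..<n} (\<lambda>k. fsc (c k) (T (u k)))" unfolding nu(2)
        using bqi brk_II by (intro T_lin) auto
      also have "\<dots> = fsum {..<n} (\<lambda>k. fsc (c k) (bact (bq k) (H (iq k))))"
        using bqi T_brk by (intro fsum_cong) auto
      finally show ?thesis .
    qed
    define Klo where "Klo = {..<n} \<inter> {k. iq k < r}"
    define Khi where "Khi = {..<n} - {k. iq k < r}"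
    define L where "L = fsum Klo (\<lambda>k. fsc (c k) (bact (bq k) (H (iq k))))"
    define TF where "TF = fsum Khi (\<lambda>k. fsc (c k) (bact (bq k) (H r)))"
    have hi: "\<And>k. k \<in> Khi \<Longrightarrow> iq k = r \<and> bq k \<in> Bor" unfolding Khi_def using bqi by fastforce
    have split: "T f = fadd L TF"
    proof -
      have "T f = fadd L (fsum Khi (\<lambda>k. fsc (c k) (bact (bq k) (H (iq k)))))"
        unfolding Tf L_def Klo_def Khi_def fsum_def fadd_def by (simp add: sum.Int_Diff[symmetric])
      also have "fsum Khi (\<lambda>k. fsc (c k) (bact (bq k) (H (iq k)))) = TF"
        unfolding TF_def using hi by (intro fsum_cong) simp
      finally show ?thesis .
    qed
    have Lk: "L \<in> kspan set1"
      unfolding L_def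
    proof (intro kspan_fsum ballI kspan_sc kspan_base)
      fix k assume "k \<in> Klo"
      thus "bact (bq k) (H (iq k)) \<in> set1" unfolding Klo_def using bqi set1_H by simp
    qed
    have LIL: "L \<in> IL" using Lk ind_kspan[OF subsp_Line set1_IL] by blast
    define G where "G = fsum Khi (\<lambda>k. fsc (c k) (bact (bq k) S2))"
    have GIL: "G \<in> IL" unfolding G_def using hi S2_IL
      by (intro ind_fsum[OF subsp_Line] ballI ind_fsc[OF subsp_Line] ind_bact[OF subsp_Line]) auto
    define N where "N = fsum Khi (\<lambda>k. fsc (c k) (brk p v r (bmul (bq k) Dm) (mono r)))"
    have TFNG: "TF = fadd N G"
    proof -
      have "TF = fsum Khi (\<lambda>k. fsc (c k) (fadd (brk p v r (bmul (bq k) Dm) (mono r)) (bact (bq k) S2)))"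
        unfolding TF_def H_top using hi by (intro fsum_cong) (simp add: bact_fadd brk_bact Dm_def)
      thus ?thesis unfolding N_def G_def by (simp add: fsum_def fsc_def fadd_def sum.distrib distrib_left)
    qed
    have NL: "\<forall>g m. 1 \<le> m \<longrightarrow> N g m = 0"
    proof (intro allI impI)
      fix g m assume m: "1 \<le> (m::nat)"
      have "T f g m = L g m + (N g m + G g m)" unfolding split TFNG fadd_def ..
      thus "N g m = 0" using IL_vals[OF yIL m] IL_vals[OF LIL m] IL_vals[OF GIL m] by simp
    qed
    have finKhi: "finite Khi" unfolding Khi_def by simp
    have "TF \<in> kspan (set1 \<union> set2)" unfolding TF_def
      by (rule M'[OF finKhi]) (use hi NL N_def in auto)
    moreover have "L \<in> kspan (set1 \<union> set2)" using Lk kspan_mono[of set1 "set1 \<union> set2"] kspan_base by blast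
    ultimately show "y \<in> kspan (set1 \<union> set2)" unfolding f(2) split using kspan_add by blast
  qed
qed

end

theorem mainTheorem11:
  fixes p r :: nat and v :: "'q::field_char_0 \<Rightarrow> int"
    and T :: "('q tri \<Rightarrow> nat \<Rightarrow> 'k::field) \<Rightarrow> ('q tri \<Rightarrow> nat \<Rightarrow> 'k)"
    and J :: "'q set"
  assumes Qp: "is_Qp p v"
    and kfin: "finite (UNIV :: 'k set)" and kchar: "(of_nat p :: 'k) = 0"
    and rle: "r \<le> p - 1"
    and T_ind: "\<forall>f\<in>ind p v r (Sym r). T f \<in> ind p v r (Sym r)"
    and T_add: "\<forall>f1\<in>ind p v r (Sym r). \<forall>f2\<in>ind p v r (Sym r). T (fadd f1 f2) = fadd (T f1) (T f2)"
    and T_smul: "\<forall>c. \<forall>f\<in>ind p v r (Sym r). T (fsc c f) = fsc c (T f)"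
    and T_equiv: "\<forall>b\<in>Bor. \<forall>f\<in>ind p v r (Sym r). T (bact b f) = bact b (T f)"
    and T_low: "\<forall>J'. repset p v J' \<longrightarrow> (\<forall>i<r.
        T (brk p v r (1, 0, 1) (mono i)) =
        fsum J' (\<lambda>j. brk p v r (of_nat p, j, 1) (vsc (red v (- j) ^ i) (mono 0))))"
    and T_top: "\<forall>J'. repset p v J' \<longrightarrow>
        T (brk p v r (1, 0, 1) (mono r)) =
        fadd (brk p v r (1, 0, of_nat p) (mono r))
             (fsum J' (\<lambda>j. brk p v r (of_nat p, j, 1) (vsc (red v (- j) ^ r) (mono 0))))"
    and J: "repset p v J"
  shows "(r = 0 \<longrightarrow>
           T ` ind p v r (Sym r) =
           kspan {bact b (fadd (brk p v r (1, 0, of_nat p) (mono 0))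
                               (fsum J (\<lambda>j. brk p v r (of_nat p, j, 1) (mono 0)))) | b. b \<in> Bor})
       \<and> (1 \<le> r \<longrightarrow>
           T ` ind p v r (Sym r) \<inter> ind p v r Line =
           kspan ({bact b (fsum J (\<lambda>j. fsc (red v (- j) ^ i) (brk p v r (of_nat p, j, 1) (mono 0))))
                    | b i. b \<in> Bor \<and> i < r}
                \<union> {bact b (fadd (fsc (\<Sum>i<p. lam i * of_nat i ^ r) (brk p v r (1, 0, 1) (mono 0)))
                                (fsum {..<p} (\<lambda>i. fsc (lam i)
                                   (bact (1, of_nat i / of_nat p, 1 / of_nat p)
                                     (fsum J (\<lambda>j. fsc (red v (- j) ^ r) (brk p v r (of_nat p, j, 1) (mono 0))))))))
                    | b lam. b \<in> Bor \<and> (\<forall>l<r. (\<Sum>i<p. of_nat i ^ l * lam i) = 0)}))"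
proof -
  interpret Tloc p v r T J
    by (rule Tloc.intro, rule qp.intro, rule Qp, rule Tloc_axioms.intro)
       (fact kchar rle T_ind T_add T_smul T_equiv T_low T_top J)+
  show ?thesis using part0 part1 unfolding set1_def set2_def by blast
qed

end
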